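(* Let $S$ be a semibounded relation in $\mathfrak H$ with lower bound $\gamma\in\mathbb R$, $c\le\gamma$, $Q_c$ a representing map for $\mathfrak t(S)-c$ with companion relation $J_c$, and let $H$ be a semibounded selfadjoint extension of $S$ which is bounded below by $c$. Then: (a) for $\{h,h'\}\in S$ and $\{f,f'\}\in H$ with $f\in\mathrm{dom}\,J_c^*$, $$(\mathfrak t(H)-c)[f-h,f-h]-\|(J_c^* )_{\rm reg}f-Q_ch\|^2=(\mathfrak t(H)-c)[f,f]-\|(J_c^* )_{\rm reg}f\|^2;$$ (b) for all $\{f,f'\}\in H$ and $\{h,h'\}\in S$ one has $f\in\mathrm{dom}\,J_c^*$ and $(\mathfrak t(H)-c)[f-h,f-h]\ge\|(J_c^* )_{\rm reg}f-Q_ch\|^2$; (c) if $\mathfrak t_H\subset\mathfrak t_{S_{{\rm K},c}}$, then equality holds in (b) for all $\{f,f'\}\in H$, $\{h,h'\}\in S$.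
   Context: Linear relations are linear subspaces of $\mathfrak H\times\mathfrak K$; $T^*$ adjoint, $T^{**}$ closure; products $RT$; $c+T=\{\{f,g+cf\}:\{f,g\}\in T\}$; for closed $T$, $T_{\rm reg}=\{\{f,(I-\pi)g\}:\{f,g\}\in T\}$ with $\pi$ the projection onto $\mathrm{mul}\,T$. $S$ semibounded with lower bound $\gamma$: $\gamma$ is the supremum of $c$ with $(\varphi',\varphi)\ge c\|\varphi\|^2$ on $S$. For a semibounded relation $T$, $\mathfrak t(T)[\varphi,\psi]=(\varphi',\psi)$ for $\{\varphi,\varphi'\},\{\psi,\psi'\}\in T$. A representing map for $\mathfrak t(S)-c$ is a linear operator $Q_c$ into a Hilbert space with $\mathrm{dom}\,Q_c=\mathrm{dom}\,S$ and $\mathfrak t(S)[\varphi,\psi]=c(\varphi,\psi)+(Q_c\varphi,Q_c\psi)$; companion relation $J_c=\{\{Q_c\varphi,\varphi'-c\varphi\}:\{\varphi,\varphi'\}\in S\}$; Kreĭn type extension $S_{{\rm K},c}=c+J_c^{**}J_c^*$. For semibounded selfadjoint $H$, $\mathfrak t_H$ is its associated closed form (closure of $\mathfrak t(H)$); $\mathfrak t_1\subset\mathfrak t_2$ means extension. "Bounded below by $c$" means $(f',f)\ge c\|f\|^2$ for $\{f,f'\}\in H$. *)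

theory Defs
  imports "HOL-Analysis.Analysis" "HOL-Library.Complex_Order"
begin

text \<open>The inner product is linear in the first and conjugate linear in
the second argument (the convention of the paper).\<close>

class complex_vector = real_vector +
  fixes scaleC :: "complex \<Rightarrow> 'a \<Rightarrow> 'a" (infixr \<open>*\<^sub>C\<close> 75)
  assumes scaleR_scaleC: "scaleR r x = scaleC (complex_of_real r) x"
    and scaleC_add_right: "a *\<^sub>C (x + y) = a *\<^sub>C x + a *\<^sub>C y"
    and scaleC_add_left: "(a + b) *\<^sub>C x = a *\<^sub>C x + b *\<^sub>C x"
    and scaleC_scaleC: "a *\<^sub>C (b *\<^sub>C x) = (a * b) *\<^sub>C x"
    and scaleC_one: "1 *\<^sub>C x = x"

class complex_inner = complex_vector + real_normed_vector +
  fixes cinner :: "'a \<Rightarrow> 'a \<Rightarrow> complex"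
  assumes cinner_commute: "cinner x y = cnj (cinner y x)"
    and cinner_add_left: "cinner (x + y) z = cinner x z + cinner y z"
    and cinner_scaleC_left: "cinner (a *\<^sub>C x) y = a * cinner x y"
    and cinner_real_nonneg: "Im (cinner x x) = 0 \<and> 0 \<le> Re (cinner x x)"
    and cinner_eq_zero_iff: "cinner x x = 0 \<longleftrightarrow> x = 0"
    and norm_eq_sqrt_cinner: "norm x = sqrt (Re (cinner x x))"

class chilbert_space = complex_inner + complete_space

text \<open>A linear relation from \<open>'a\<close> to \<open>'b\<close> is a linear subspace of \<open>'a \<times> 'b\<close>,
represented as a set of pairs \<open>{f, g}\<close> = \<open>(f, g)\<close>.\<close>

definition lin_rel :: "('a::complex_vector \<times> 'b::complex_vector) set \<Rightarrow> bool" where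
  "lin_rel T \<longleftrightarrow> (0, 0) \<in> T
     \<and> (\<forall>p\<in>T. \<forall>q\<in>T. (fst p + fst q, snd p + snd q) \<in> T)
     \<and> (\<forall>a. \<forall>p\<in>T. (a *\<^sub>C fst p, a *\<^sub>C snd p) \<in> T)"

definition rdom :: "('a \<times> 'b) set \<Rightarrow> 'a set" where
  "rdom T = fst ` T"

definition rmul :: "('a::zero \<times> 'b) set \<Rightarrow> 'b set" where
  "rmul T = {g. (0, g) \<in> T}"

definition radj :: "('a::complex_inner \<times> 'b::complex_inner) set \<Rightarrow> ('b \<times> 'a) set" where
  "radj T = {(h, k). \<forall>(f, g)\<in>T. cinner g h = cinner f k}"

definition rprod :: "('b \<times> 'c) set \<Rightarrow> ('a \<times> 'b) set \<Rightarrow> ('a \<times> 'c) set" where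
  "rprod R T = {(f, k). \<exists>g. (f, g) \<in> T \<and> (g, k) \<in> R}"

definition rshift :: "real \<Rightarrow> ('a \<times> 'a::real_vector) set \<Rightarrow> ('a \<times> 'a) set" where
  "rshift c T = {(f, g + c *\<^sub>R f) | f g. (f, g) \<in> T}"

definition orth_proj :: "'a::complex_inner set \<Rightarrow> 'a \<Rightarrow> 'a" where
  "orth_proj M x = (THE p. p \<in> M \<and> (\<forall>m\<in>M. cinner (x - p) m = 0))"

definition rreg :: "('a::zero \<times> 'b::complex_inner) set \<Rightarrow> ('a \<times> 'b) set" where
  "rreg T = {(f, g - orth_proj (rmul T) g) | f g. (f, g) \<in> T}"

definition rapp :: "('a \<times> 'b) set \<Rightarrow> 'a \<Rightarrow> 'b" where
  "rapp T f = (SOME g. (f, g) \<in> T)"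

definition selfadjoint :: "('a::complex_inner \<times> 'a) set \<Rightarrow> bool" where
  "selfadjoint H \<longleftrightarrow> H = radj H"

text \<open>\<open>T\<close> is bounded below by \<open>c\<close>: \<open>(f',f) \<ge> c \<parallel>f\<parallel>\<^sup>2\<close> for all \<open>{f,f'} \<in> T\<close>
(in particular \<open>(f',f)\<close> is real).\<close>
definition bounded_below :: "('a::complex_inner \<times> 'a) set \<Rightarrow> real \<Rightarrow> bool" where
  "bounded_below T c \<longleftrightarrow>
     (\<forall>(f, f')\<in>T. complex_of_real (c * (norm f)\<^sup>2) \<le> cinner f' f)"

definition semibounded :: "('a::complex_inner \<times> 'a) set \<Rightarrow> bool" where
  "semibounded T \<longleftrightarrow> lin_rel T \<and> (\<exists>c. bounded_below T c)"

definition is_lower_bound :: "('a::complex_inner \<times> 'a) set \<Rightarrow> real \<Rightarrow> bool" where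
  "is_lower_bound T \<gamma> \<longleftrightarrow>
     bdd_above {c. bounded_below T c} \<and> \<gamma> = Sup {c. bounded_below T c}"

definition tform :: "('a::complex_inner \<times> 'a) set \<Rightarrow> 'a \<Rightarrow> 'a \<Rightarrow> complex" where
  "tform T \<phi> \<psi> = cinner (SOME \<phi>'. (\<phi>, \<phi>') \<in> T) \<psi>"

text \<open>A sesquilinear form is represented by its domain and its values.\<close>
type_synonym 'a sform = "'a set \<times> ('a \<Rightarrow> 'a \<Rightarrow> complex)"

definition rel_form :: "('a::complex_inner \<times> 'a) set \<Rightarrow> 'a sform" where
  "rel_form T = (rdom T, tform T)"

definition form_conv :: "'a::complex_inner sform \<Rightarrow> 'a \<Rightarrow> (nat \<Rightarrow> 'a) \<Rightarrow> bool" where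
  "form_conv t f s \<longleftrightarrow> (\<forall>n. s n \<in> fst t) \<and> s \<longlonglongrightarrow> f \<and>
     (\<forall>e>0. \<exists>N. \<forall>n\<ge>N. \<forall>m\<ge>N. norm (snd t (s n - s m) (s n - s m)) < e)"

definition form_closure :: "'a::complex_inner sform \<Rightarrow> 'a sform" where
  "form_closure t =
     ({f. \<exists>s. form_conv t f s},
      \<lambda>f g. THE v. \<forall>s s'. form_conv t f s \<longrightarrow> form_conv t g s' \<longrightarrow>
                          (\<lambda>n. snd t (s n) (s' n)) \<longlonglongrightarrow> v)"

definition closed_form :: "('a::complex_inner \<times> 'a) set \<Rightarrow> 'a sform" where
  "closed_form H = form_closure (rel_form H)"

definition form_ext :: "'a sform \<Rightarrow> 'a sform \<Rightarrow> bool" where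
  "form_ext t1 t2 \<longleftrightarrow> fst t1 \<subseteq> fst t2 \<and>
     (\<forall>f\<in>fst t1. \<forall>g\<in>fst t1. snd t1 f g = snd t2 f g)"

definition representing_map ::
  "('a::complex_inner \<times> 'a) set \<Rightarrow> real \<Rightarrow> ('a \<Rightarrow> 'k::complex_inner) \<Rightarrow> bool" where
  "representing_map S c Q \<longleftrightarrow>
     (\<forall>\<phi>\<in>rdom S. \<forall>\<psi>\<in>rdom S. \<forall>a b.
        Q (a *\<^sub>C \<phi> + b *\<^sub>C \<psi>) = a *\<^sub>C Q \<phi> + b *\<^sub>C Q \<psi>) \<and>
     (\<forall>\<phi>\<in>rdom S. \<forall>\<psi>\<in>rdom S.
        tform S \<phi> \<psi> = complex_of_real c * cinner \<phi> \<psi> + cinner (Q \<phi>) (Q \<psi>))"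

definition companion ::
  "('a::complex_inner \<times> 'a) set \<Rightarrow> real \<Rightarrow> ('a \<Rightarrow> 'k::complex_inner) \<Rightarrow> ('k \<times> 'a) set" where
  "companion S c Q = {(Q \<phi>, \<phi>' - c *\<^sub>R \<phi>) | \<phi> \<phi>'. (\<phi>, \<phi>') \<in> S}"

definition krein_ext ::
  "('a::complex_inner \<times> 'a) set \<Rightarrow> real \<Rightarrow> ('a \<Rightarrow> 'k::complex_inner) \<Rightarrow> ('a \<times> 'a) set" where
  "krein_ext S c Q =
     rshift c (rprod (radj (radj (companion S c Q))) (radj (companion S c Q)))"

end

theory Submission
  imports Defs
begin


lemma scaleC_zero_left[simp]: "0 *\<^sub>C (x::'a::complex_vector) = 0"
proof -
  have "0 *\<^sub>C x = 0 *\<^sub>C x + 0 *\<^sub>C x" using scaleC_add_left[of 0 0 x] by simp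
  then show ?thesis by simp
qed

lemma scaleC_zero_right[simp]: "a *\<^sub>C (0::'a::complex_vector) = 0"
proof -
  have "a *\<^sub>C (0::'a) = a *\<^sub>C 0 + a *\<^sub>C 0" using scaleC_add_right[of a 0 "0::'a"] by simp
  then show ?thesis by simp
qed

lemma scaleC_minus1: "(-1) *\<^sub>C (x::'a::complex_vector) = - x"
  using scaleR_scaleC[of "-1" x] by simp

lemma scaleC_minus_right: "a *\<^sub>C (- x) = - (a *\<^sub>C (x::'a::complex_vector))"
proof -
  have "a *\<^sub>C x + a *\<^sub>C (-x) = 0" using scaleC_add_right[of a x "-x"] by simp
  then show ?thesis by (simp add: eq_neg_iff_add_eq_0 add.commute)
qed

lemma scaleC_diff_right: "a *\<^sub>C (x - y) = a *\<^sub>C x - a *\<^sub>C (y::'a::complex_vector)"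
  using scaleC_add_right[of a x "-y"] scaleC_minus_right[of a y] by simp

lemma scaleC_minus_left: "(- a) *\<^sub>C x = - (a *\<^sub>C (x::'a::complex_vector))"
  using scaleC_scaleC[of "-1" a x] scaleC_minus1[of "a *\<^sub>C x"] by simp

lemma scaleC_diff_left: "(a - b) *\<^sub>C x = a *\<^sub>C x - b *\<^sub>C (x::'a::complex_vector)"
  using scaleC_add_left[of a "-b" x] scaleC_minus_left[of b x] by simp

lemma cinner_zero_left[simp]: "cinner 0 (y::'a::complex_inner) = 0"
  using cinner_add_left[of 0 0 y] by simp

lemma cinner_minus_left: "cinner (- x) (y::'a::complex_inner) = - cinner x y"
  using cinner_scaleC_left[of "-1" x y] scaleC_minus1[of x] by simp

lemma cinner_diff_left: "cinner (x - z) (y::'a::complex_inner) = cinner x y - cinner z y"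
  using cinner_add_left[of x "-z" y] cinner_minus_left[of z y] by simp

lemma cinner_add_right: "cinner x (y + z) = cinner x y + cinner x (z::'a::complex_inner)"
  by (metis cinner_commute cinner_add_left complex_cnj_add)

lemma cinner_scaleC_right: "cinner x (a *\<^sub>C y) = cnj a * cinner x (y::'a::complex_inner)"
  by (metis cinner_commute cinner_scaleC_left complex_cnj_mult)

lemma cinner_zero_right[simp]: "cinner x (0::'a::complex_inner) = 0"
  by (metis cinner_commute cinner_zero_left complex_cnj_zero)

lemma cinner_minus_right: "cinner x (- y) = - cinner x (y::'a::complex_inner)"
  by (metis cinner_commute cinner_minus_left complex_cnj_minus)

lemma cinner_diff_right: "cinner x (y - z) = cinner x y - cinner x (z::'a::complex_inner)"
  by (metis cinner_commute cinner_diff_left complex_cnj_diff)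

lemma cinner_scaleR_left: "cinner (r *\<^sub>R x) y = complex_of_real r * cinner x (y::'a::complex_inner)"
  by (simp add: scaleR_scaleC cinner_scaleC_left)

lemma cinner_scaleR_right: "cinner x (r *\<^sub>R y) = complex_of_real r * cinner x (y::'a::complex_inner)"
  by (simp add: scaleR_scaleC cinner_scaleC_right)

lemma cinner_self: "cinner x x = complex_of_real ((norm (x::'a::complex_inner))\<^sup>2)"
proof -
  have "Im (cinner x x) = 0" "0 \<le> Re (cinner x x)" using cinner_real_nonneg by auto
  moreover have "(norm x)\<^sup>2 = Re (cinner x x)" using norm_eq_sqrt_cinner[of x] calculation by simp
  ultimately show ?thesis by (simp add: complex_eq_iff)
qed

lemma cs_aux:
  fixes p q :: real and z :: complex
  assumes p: "0 \<le> p" and q: "0 \<le> q"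
    and H: "\<And>a. 0 \<le> p + 2 * Re (a * cnj z) + (cmod a)\<^sup>2 * q"
  shows "(cmod z)\<^sup>2 \<le> p * q"
proof (cases "q = 0")
  case True
  show ?thesis
  proof (rule ccontr)
    assume "\<not> ?thesis"
    then have z: "z \<noteq> 0" using True by auto
    define t where "t = (p + 1) / (2 * (cmod z)\<^sup>2)"
    have "0 \<le> p + 2 * Re (complex_of_real (-t) * z * cnj z)" using H[of "complex_of_real (-t) * z"] True by simp
    also have "complex_of_real (-t) * z * cnj z = complex_of_real (- t * (cmod z)\<^sup>2)"
      by (metis complex_norm_square mult.assoc of_real_mult of_real_power)
    also have "Re (complex_of_real (- t * (cmod z)\<^sup>2)) = - t * (cmod z)\<^sup>2" by simp
    finally have "0 \<le> p + 2 * (- t * (cmod z)\<^sup>2)" .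
    moreover have "t * (cmod z)\<^sup>2 = (p+1)/2" using z by (simp add: t_def)
    ultimately show False by simp
  qed
next
  case False
  then have qp: "q > 0" using q by simp
  have "0 \<le> p + 2 * Re (complex_of_real (-1/q) * z * cnj z) + (cmod (complex_of_real (-1/q) * z))\<^sup>2 * q"
    using H[of "complex_of_real (-1/q) * z"] by simp
  also have "complex_of_real (-1/q) * z * cnj z = complex_of_real (-1/q * (cmod z)\<^sup>2)"
      by (metis complex_norm_square mult.assoc of_real_mult of_real_power)
  also have "Re (complex_of_real (-1/q * (cmod z)\<^sup>2)) = - (cmod z)\<^sup>2 / q" by simp
  also have "(cmod (complex_of_real (-1/q) * z))\<^sup>2 * q = (cmod z)\<^sup>2 / q"
  proof -
    have e: "cmod (complex_of_real (-1/q) * z) = cmod z / q" using qp by (simp add: norm_mult norm_divide)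
    have "(cmod (complex_of_real (-1/q) * z))\<^sup>2 * q = (cmod z / q)\<^sup>2 * q" by (simp only: e)
    also have "\<dots> = (cmod z)\<^sup>2 / q" using qp by (simp add: power2_eq_square)
    finally show ?thesis .
  qed
  finally have "0 \<le> p - (cmod z)\<^sup>2 / q" by simp
  then show ?thesis using qp by (simp add: field_simps)
qed

lemma cinner_expand:
  "cinner (x + a *\<^sub>C y) (x + a *\<^sub>C y) =
     cinner x x + cnj a * cinner x y + a * cinner y x + a * cnj a * cinner y (y::'a::complex_inner)"
  by (simp add: cinner_add_left cinner_add_right cinner_scaleC_left cinner_scaleC_right algebra_simps)

lemma re_cnj_sum: "Re (cnj a * z + a * cnj z) = 2 * Re (a * cnj z)"
  by simp

lemma re_acnja: "Re (a * cnj a * complex_of_real q) = (cmod a)\<^sup>2 * q"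
  by (metis Re_complex_of_real complex_norm_square mult.commute of_real_mult of_real_power)

lemma norm_sq_re: "(norm (x::'a::complex_inner))\<^sup>2 = Re (cinner x x)"
  by (simp add: cinner_self)

lemma cinner_cs: "cmod (cinner x y) \<le> norm x * norm (y::'a::complex_inner)"
proof -
  have "(cmod (cinner x y))\<^sup>2 \<le> (norm x)\<^sup>2 * (norm y)\<^sup>2"
  proof (rule cs_aux)
    fix a
    have "0 \<le> Re (cinner (x + a *\<^sub>C y) (x + a *\<^sub>C y))" using cinner_real_nonneg[of "x + a *\<^sub>C y"] by blast
    also have "\<dots> = (norm x)\<^sup>2 + Re (cnj a * cinner x y + a * cnj (cinner x y)) + Re (a * cnj a * complex_of_real ((norm y)\<^sup>2))"
      unfolding cinner_expand by (simp add: cinner_self[of y] cinner_self[of x] cinner_commute[of y x])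
    also have "\<dots> = (norm x)\<^sup>2 + 2 * Re (a * cnj (cinner x y)) + (cmod a)\<^sup>2 * (norm y)\<^sup>2"
      by (simp only: re_cnj_sum re_acnja)
    finally show "0 \<le> (norm x)\<^sup>2 + 2 * Re (a * cnj (cinner x y)) + (cmod a)\<^sup>2 * (norm y)\<^sup>2" .
  qed auto
  then have "(cmod (cinner x y))\<^sup>2 \<le> (norm x * norm y)\<^sup>2" by (simp add: power_mult_distrib)
  then show ?thesis by (rule power2_le_imp_le) simp
qed

lemma cinner_bb: "bounded_bilinear (cinner :: 'a::complex_inner \<Rightarrow> 'a \<Rightarrow> complex)"
proof
  fix a a' b b' :: 'a and r :: real
  show "cinner (a + a') b = cinner a b + cinner a' b" by (rule cinner_add_left)
  show "cinner a (b + b') = cinner a b + cinner a b'" by (rule cinner_add_right)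
  show "cinner (r *\<^sub>R a) b = r *\<^sub>R cinner a b" by (simp add: cinner_scaleR_left scaleR_conv_of_real)
  show "cinner a (r *\<^sub>R b) = r *\<^sub>R cinner a b" by (simp add: cinner_scaleR_right scaleR_conv_of_real)
next
  show "\<exists>K. \<forall>a b::'a. norm (cinner a b) \<le> norm a * norm b * K"
    by (rule exI[of _ 1]) (simp add: cinner_cs)
qed

lemmas tendsto_cinner = bounded_bilinear.tendsto[OF cinner_bb]

lemma norm_diff_sq: "(norm (x - y))\<^sup>2 = (norm x)\<^sup>2 - 2 * Re (cinner x y) + (norm (y::'a::complex_inner))\<^sup>2"
proof -
  have "Re (cinner (x - y) (x - y)) = Re (cinner x x) - Re (cinner x y) - Re (cinner y x) + Re (cinner y y)"
    by (simp add: cinner_diff_left cinner_diff_right)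
  moreover have "Re (cinner y x) = Re (cinner x y)" by (subst cinner_commute) simp
  ultimately show ?thesis by (simp add: norm_sq_re)
qed

lemma norm_add_sq: "(norm (x + y))\<^sup>2 = (norm x)\<^sup>2 + 2 * Re (cinner x y) + (norm (y::'a::complex_inner))\<^sup>2"
proof -
  have "Re (cinner (x + y) (x + y)) = Re (cinner x x) + Re (cinner x y) + Re (cinner y x) + Re (cinner y y)"
    by (simp add: cinner_add_left cinner_add_right)
  moreover have "Re (cinner y x) = Re (cinner x y)" by (subst cinner_commute) simp
  ultimately show ?thesis by (simp add: norm_sq_re)
qed

lemma cinner_eq0_imp: "cinner x x = 0 \<Longrightarrow> x = (0::'a::complex_inner)"
  using cinner_eq_zero_iff by blast



lemma lin_quad_zero:
  fixes d B :: real
  assumes B: "0 \<le> B" and H: "\<And>t. t * d \<le> t\<^sup>2 * B"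
  shows "d = 0"
proof (rule ccontr)
  assume d: "d \<noteq> 0"
  define P where "P = 2 * B + 2"
  have pos: "P > 0" using B by (simp add: P_def)
  have D: "d * d > 0" using d not_real_square_gt_zero by blast
  have "(d / P) * d \<le> (d / P)\<^sup>2 * B" by (rule H)
  moreover have "(d / P) * d = (d * d) / P" by simp
  moreover have "(d / P)\<^sup>2 * B = ((d * d) / P) * (B / P)" by (simp add: power2_eq_square)
  ultimately have "((d * d) / P) * 1 \<le> ((d * d) / P) * (B / P)" by simp
  moreover have "B / P < 1" using pos B by (simp add: P_def)
  moreover have "(d * d) / P > 0" using D pos by simp
  ultimately have "1 \<le> B / P" using mult_le_cancel_left_pos by blast
  then show False using \<open>B / P < 1\<close> by linarith
qed

lemma scaleC_half: "(1/2::complex) *\<^sub>C x = (1/2::real) *\<^sub>R (x::'a::complex_vector)"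
  by (simp add: scaleR_scaleC)

lemma scaleC_ofreal: "complex_of_real t *\<^sub>C x = t *\<^sub>R (x::'a::complex_vector)"
  by (simp add: scaleR_scaleC)

lemma parallelogram: "(norm (x + y))\<^sup>2 + (norm (x - y))\<^sup>2 = 2 * (norm x)\<^sup>2 + 2 * (norm (y::'a::complex_inner))\<^sup>2"
  by (simp add: norm_add_sq norm_diff_sq)

lemma mid_arith: "n2 = s / 4 \<Longrightarrow> s + d = 2*a + 2*b \<Longrightarrow> r = (x+y)/2 \<Longrightarrow>
   r - n2/2 = (x - a/2)/2 + (y - b/2)/2 + d/(8::real)"
  by (simp add: field_simps)

lemma riesz_min:
  fixes A :: "'p set" and add :: "'p \<Rightarrow> 'p \<Rightarrow> 'p" and sc :: "complex \<Rightarrow> 'p \<Rightarrow> 'p"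
    and G :: "'p \<Rightarrow> 'k::chilbert_space" and L :: "'p \<Rightarrow> complex" and C :: real
  assumes z: "z0 \<in> A"
    and add: "\<And>p q. p\<in>A \<Longrightarrow> q\<in>A \<Longrightarrow> add p q \<in> A"
    and sc: "\<And>a p. p\<in>A \<Longrightarrow> sc a p \<in> A"
    and Gadd: "\<And>p q. p\<in>A \<Longrightarrow> q\<in>A \<Longrightarrow> G (add p q) = G p + G q"
    and Gsc: "\<And>a p. p\<in>A \<Longrightarrow> G (sc a p) = a *\<^sub>C G p"
    and Ladd: "\<And>p q. p\<in>A \<Longrightarrow> q\<in>A \<Longrightarrow> L (add p q) = L p + L q"
    and Lsc: "\<And>a p. p\<in>A \<Longrightarrow> L (sc a p) = a * L p"
    and bd: "\<And>p. p\<in>A \<Longrightarrow> cmod (L p) \<le> C * norm (G p)"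
  shows "\<exists>k s. (\<forall>n. s n \<in> A) \<and> (\<lambda>n. G (s n)) \<longlonglongrightarrow> k \<and> (\<forall>p\<in>A. L p = cinner (G p) k)"
proof -
  define \<Phi> where "\<Phi> p = Re (L p) - (norm (G p))\<^sup>2 / 2" for p
  have \<Phi>bd: "\<Phi> p \<le> C\<^sup>2 / 2" if "p \<in> A" for p
  proof -
    have "Re (L p) \<le> C * norm (G p)" using bd[OF that] complex_Re_le_cmod[of "L p"] by linarith
    moreover have "0 \<le> (C - norm (G p))\<^sup>2" by simp
    ultimately show ?thesis unfolding \<Phi>_def by (simp add: power2_eq_square algebra_simps)
  qed
  define m where "m = Sup (\<Phi> ` A)"
  have bdd: "bdd_above (\<Phi> ` A)" using \<Phi>bd by (rule bdd_aboveI2)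
  have ne: "\<Phi> ` A \<noteq> {}" using z by auto
  have le_m: "\<Phi> p \<le> m" if "p \<in> A" for p
    unfolding m_def using bdd that by (simp add: cSup_upper)
  have "\<exists>p\<in>A. m - inverse (real (Suc n)) < \<Phi> p" for n
  proof -
    have "m - inverse (real (Suc n)) < Sup (\<Phi> ` A)" unfolding m_def by simp
    from less_cSupD[OF ne this] show ?thesis by auto
  qed
  then obtain s where sA: "\<And>n. s n \<in> A" and sgt: "\<And>n. m - inverse (real (Suc n)) < \<Phi> (s n)"
    by metis
  define mid where "mid p q = sc (1/2) (add p q)" for p q
  have mid_ineq: "(norm (G p - G q))\<^sup>2 / 8 \<le> m - \<Phi> p / 2 - \<Phi> q / 2" if "p \<in> A" "q \<in> A" for p q
  proof -
    have mA: "mid p q \<in> A" unfolding mid_def using that add sc by auto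
    have Gm: "G (mid p q) = (1/2::real) *\<^sub>R (G p + G q)"
      unfolding mid_def using that by (simp add: Gsc add Gadd scaleC_half)
    have Lm: "L (mid p q) = (L p + L q) / 2"
      unfolding mid_def using that by (simp add: Lsc add Ladd)
    have "\<Phi> (mid p q) = \<Phi> p / 2 + \<Phi> q / 2 + (norm (G p - G q))\<^sup>2 / 8"
    proof -
      have e1: "(norm (G (mid p q)))\<^sup>2 = (norm (G p + G q))\<^sup>2 / 4"
        unfolding Gm by (simp add: power2_eq_square)
      have e2: "Re ((L p + L q) / 2) = (Re (L p) + Re (L q)) / 2" by simp
      show ?thesis unfolding \<Phi>_def Lm by (rule mid_arith[OF e1 parallelogram[of "G p" "G q"] e2])
    qed
    then show ?thesis using le_m[OF mA] by simp
  qed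
  have ph_lim: "(\<lambda>n. \<Phi> (s n)) \<longlonglongrightarrow> m"
  proof -
    have "(\<lambda>n. m - inverse (real (Suc n))) \<longlonglongrightarrow> m - 0"
      by (intro tendsto_intros LIMSEQ_inverse_real_of_nat)
    then have l: "(\<lambda>n. m - inverse (real (Suc n))) \<longlonglongrightarrow> m" by simp
    have ev1: "\<forall>\<^sub>F n in sequentially. m - inverse (real (Suc n)) \<le> \<Phi> (s n)"
      using sgt by (simp add: less_imp_le)
    have ev2: "\<forall>\<^sub>F n in sequentially. \<Phi> (s n) \<le> m" using le_m sA by simp
    show ?thesis by (rule tendsto_sandwich[OF ev1 ev2 l tendsto_const])
  qed
  have cauchy: "Cauchy (\<lambda>n. G (s n))"
  proof (rule CauchyI)
    fix e :: real assume e: "0 < e"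
    obtain N :: nat where N: "16 / e\<^sup>2 < real N" using reals_Archimedean2 by blast
    have "16 / e\<^sup>2 > 0" using e by simp
    then have Npos: "real N > 0" using N by linarith
    show "\<exists>M. \<forall>m'\<ge>M. \<forall>n\<ge>M. norm (G (s m') - G (s n)) < e"
    proof (intro exI allI impI)
      fix a b assume a: "N \<le> a" and b: "N \<le> b"
      have ia: "inverse (real (Suc a)) < e\<^sup>2 / 16"
      proof -
        have "inverse (real (Suc a)) \<le> inverse (real N)" using a Npos by (simp add: le_imp_inverse_le)
        also have "inverse (real N) < e\<^sup>2/16" using N e Npos
          by (simp add: field_simps inverse_eq_divide)
        finally show ?thesis .
      qed
      have ib: "inverse (real (Suc b)) < e\<^sup>2 / 16"
      proof -
        have "inverse (real (Suc b)) \<le> inverse (real N)" using b Npos by (simp add: le_imp_inverse_le)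
        also have "inverse (real N) < e\<^sup>2/16" using N e Npos
          by (simp add: field_simps inverse_eq_divide)
        finally show ?thesis .
      qed
      have "(norm (G (s a) - G (s b)))\<^sup>2 / 8 \<le> m - \<Phi> (s a) / 2 - \<Phi> (s b) / 2"
        using mid_ineq sA by blast
      also have "\<dots> < e\<^sup>2 / 16" using sgt[of a] sgt[of b] ia ib by simp
      finally have "(norm (G (s a) - G (s b)))\<^sup>2 / 8 < e\<^sup>2 / 16" .
      then have "(norm (G (s a) - G (s b)))\<^sup>2 < e\<^sup>2" using zero_le_power2[of "norm (G (s a) - G (s b))"] by linarith
      then show "norm (G (s a) - G (s b)) < e" using e by (simp add: power_less_imp_less_base)
    qed
  qed
  then obtain k where klim: "(\<lambda>n. G (s n)) \<longlonglongrightarrow> k"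
    using Cauchy_convergent_iff convergent_def by blast
  have re_eq: "Re (L q) = Re (cinner k (G q))" if q: "q \<in> A" for q
  proof -
    have "\<forall>t. t * (Re (L q) - Re (cinner k (G q))) \<le> t\<^sup>2 * ((norm (G q))\<^sup>2 / 2)"
    proof
      fix t :: real
      have ineq: "t * (Re (L q) - Re (cinner (G (s n)) (G q))) \<le> (m - \<Phi> (s n)) + t\<^sup>2 * ((norm (G q))\<^sup>2 / 2)" for n
      proof -
        define p where "p = add (s n) (sc (complex_of_real t) q)"
        have pA: "p \<in> A" unfolding p_def using sA q add sc by auto
        have Gp: "G p = G (s n) + t *\<^sub>R G q" unfolding p_def using sA q sc
          by (simp add: Gadd Gsc scaleC_ofreal)
        have Lp: "L p = L (s n) + complex_of_real t * L q" unfolding p_def using sA q sc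
          by (simp add: Ladd Lsc)
        have "(norm (G p))\<^sup>2 = (norm (G (s n)))\<^sup>2 + 2 * t * Re (cinner (G (s n)) (G q)) + t\<^sup>2 * (norm (G q))\<^sup>2"
          unfolding Gp norm_add_sq by (simp add: cinner_scaleR_right power_mult_distrib)
        then have "\<Phi> p = \<Phi> (s n) + t * Re (L q) - t * Re (cinner (G (s n)) (G q)) - t\<^sup>2 * ((norm (G q))\<^sup>2 / 2)"
          unfolding \<Phi>_def Lp by (simp add: algebra_simps)
        then show ?thesis using le_m[OF pA] by (simp add: algebra_simps)
      qed
      have l1: "(\<lambda>n. t * (Re (L q) - Re (cinner (G (s n)) (G q)))) \<longlonglongrightarrow> t * (Re (L q) - Re (cinner k (G q)))"
        by (intro tendsto_intros tendsto_cinner klim)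
      have l2: "(\<lambda>n. (m - \<Phi> (s n)) + t\<^sup>2 * ((norm (G q))\<^sup>2 / 2)) \<longlonglongrightarrow> (m - m) + t\<^sup>2 * ((norm (G q))\<^sup>2 / 2)"
        by (intro tendsto_intros ph_lim)
      from LIMSEQ_le[OF l1 l2] ineq show "t * (Re (L q) - Re (cinner k (G q))) \<le> t\<^sup>2 * ((norm (G q))\<^sup>2 / 2)"
        by auto
    qed
    then have "Re (L q) - Re (cinner k (G q)) = 0" by (intro lin_quad_zero[of "(norm (G q))\<^sup>2 / 2"]) auto
    then show ?thesis by simp
  qed
  have "L q = cinner (G q) k" if q: "q \<in> A" for q
  proof -
    have r1: "Re (L q) = Re (cinner k (G q))" by (rule re_eq[OF q])
    have r2: "Re (L (sc \<i> q)) = Re (cinner k (G (sc \<i> q)))" by (rule re_eq[OF sc[OF q]])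
    then have "- Im (L q) = Im (cinner k (G q))" using q by (simp add: Lsc Gsc cinner_scaleC_right)
    then show ?thesis using r1 by (subst cinner_commute) (simp add: complex_eq_iff)
  qed
  then show ?thesis using sA klim by blast
qed



lemma lr_zero: "lin_rel T \<Longrightarrow> (0, 0) \<in> T"
  by (simp add: lin_rel_def)

lemma lr_add: "lin_rel T \<Longrightarrow> (x, y) \<in> T \<Longrightarrow> (u, v) \<in> T \<Longrightarrow> (x + u, y + v) \<in> T"
  unfolding lin_rel_def by (metis fst_conv snd_conv)

lemma lr_scale: "lin_rel T \<Longrightarrow> (x, y) \<in> T \<Longrightarrow> (a *\<^sub>C x, a *\<^sub>C y) \<in> T"
  unfolding lin_rel_def by (metis fst_conv snd_conv)

lemma lr_diff: "lin_rel T \<Longrightarrow> (x, y) \<in> T \<Longrightarrow> (u, v) \<in> T \<Longrightarrow> (x - u, y - v) \<in> T"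
  using lr_add[of T x y "(-1) *\<^sub>C u" "(-1) *\<^sub>C v"] lr_scale[of T u v "-1"]
  by (simp add: scaleC_minus1)

lemma lr_comb: "lin_rel T \<Longrightarrow> (x, y) \<in> T \<Longrightarrow> (u, v) \<in> T \<Longrightarrow> (x + a *\<^sub>C u, y + a *\<^sub>C v) \<in> T"
  using lr_add lr_scale by blast

lemma radj_iff: "(h, k) \<in> radj T \<longleftrightarrow> (\<forall>(f, g)\<in>T. cinner g h = cinner f k)"
  by (simp add: radj_def)

lemma radj_mem: "p \<in> radj T \<longleftrightarrow> (\<forall>f g. (f, g) \<in> T \<longrightarrow> cinner g (fst p) = cinner f (snd p))"
  by (cases p) (auto simp: radj_def)

lemma radj_lin: "lin_rel (radj T)"
proof -
  have "(0,0) \<in> radj T" by (simp add: radj_mem)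
  moreover have "(fst p + fst q, snd p + snd q) \<in> radj T" if "p\<in>radj T" "q\<in>radj T" for p q
    using that by (simp add: radj_mem cinner_add_right)
  moreover have "(a *\<^sub>C fst p, a *\<^sub>C snd p) \<in> radj T" if "p\<in>radj T" for p a
    using that by (simp add: radj_mem cinner_scaleC_right)
  ultimately show ?thesis unfolding lin_rel_def by blast
qed

lemma radj_limit:
  assumes "\<And>n. (x n, y n) \<in> radj T" "x \<longlonglongrightarrow> h" "y \<longlonglongrightarrow> k"
  shows "(h, k) \<in> radj T"
  unfolding radj_iff
proof (clarify)
  fix f g assume fg: "(f, g) \<in> T"
  have "(\<lambda>n. cinner g (x n)) \<longlonglongrightarrow> cinner g h" by (intro tendsto_cinner tendsto_const assms)
  moreover have "(\<lambda>n. cinner f (y n)) \<longlonglongrightarrow> cinner f k" by (intro tendsto_cinner tendsto_const assms)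
  moreover have "cinner g (x n) = cinner f (y n)" for n using assms(1)[of n] fg unfolding radj_iff by auto
  ultimately show "cinner g h = cinner f k" using LIMSEQ_unique by fastforce
qed

lemma rmul_radj_iff: "m \<in> rmul (radj T) \<longleftrightarrow> (0, m) \<in> radj T"
  by (simp add: rmul_def)

lemma orth_proj_radj:
  fixes T :: "('a::chilbert_space \<times> 'b::complex_inner) set"
  shows "orth_proj (rmul (radj T)) x \<in> rmul (radj T) \<and>
     (\<forall>m\<in>rmul (radj T). cinner (x - orth_proj (rmul (radj T)) x) m = 0)"
proof -
  define M where "M = rmul (radj T)"
  have M0: "0 \<in> M" unfolding M_def rmul_radj_iff by (rule lr_zero[OF radj_lin])
  have Madd: "p + q \<in> M" if "p \<in> M" "q \<in> M" for p q
  proof -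
    have "(0 + 0, p + q) \<in> radj T"
      using that unfolding M_def rmul_radj_iff by (intro lr_add[OF radj_lin])
    then show ?thesis unfolding M_def rmul_radj_iff by simp
  qed
  have Msc: "a *\<^sub>C p \<in> M" if "p \<in> M" for a p
  proof -
    have "(a *\<^sub>C 0, a *\<^sub>C p) \<in> radj T"
      using that unfolding M_def rmul_radj_iff by (intro lr_scale[OF radj_lin])
    then show ?thesis unfolding M_def rmul_radj_iff by simp
  qed
  have Mlim: "k \<in> M" if "\<And>n. s n \<in> M" "s \<longlonglongrightarrow> k" for s k
  proof -
    have "(0, k) \<in> radj T"
      by (rule radj_limit[where x="\<lambda>n. 0" and y=s]) (use that in \<open>auto simp: M_def rmul_radj_iff\<close>)
    then show ?thesis unfolding M_def rmul_radj_iff .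
  qed
  obtain k s where s: "\<forall>n. s n \<in> M" "(\<lambda>n. id (s n)) \<longlonglongrightarrow> k" "\<forall>p\<in>M. cinner p x = cinner (id p) k"
    using riesz_min[of 0 M "(+)" "(*\<^sub>C)" id "\<lambda>m. cinner m x" "norm x"] M0 Madd Msc
    by (auto simp: cinner_add_left cinner_scaleC_left scaleC_add_right cinner_cs mult.commute)
  have kM: "k \<in> M" using Mlim[of s k] s by simp
  have orth: "cinner (x - k) m = 0" if "m \<in> M" for m
  proof -
    have "cinner m (x - k) = 0" using s(3) that by (simp add: cinner_diff_right)
    then show ?thesis by (subst cinner_commute) simp
  qed
  have uniq: "p = k" if "p \<in> M" "\<forall>m\<in>M. cinner (x - p) m = 0" for p
  proof -
    have d: "p - k \<in> M" using Madd[OF that(1) Msc[OF kM, of "-1"]] by (simp add: scaleC_minus1)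
    have e1: "cinner (x - k) (p - k) = 0" using orth[OF d] .
    have e2: "cinner (x - p) (p - k) = 0" using that(2) d by blast
    have e3: "(x - k) - (x - p) = p - k" by simp
    have "cinner (p - k) (p - k) = cinner (x - k) (p - k) - cinner (x - p) (p - k)"
      by (subst e3[symmetric], rule cinner_diff_left)
    then have "cinner (p - k) (p - k) = 0" using e1 e2 by simp
    then have "p - k = 0" by (rule cinner_eq0_imp)
    then show ?thesis by simp
  qed
  have "orth_proj M x = k"
    unfolding orth_proj_def
  proof (rule the_equality)
    show "k \<in> M \<and> (\<forall>m\<in>M. cinner (x - k) m = 0)" using kM orth by blast
  next
    fix p assume "p \<in> M \<and> (\<forall>m\<in>M. cinner (x - p) m = 0)"
    then show "p = k" using uniq by blast
  qed
  then have "orth_proj M x \<in> M \<and> (\<forall>m\<in>M. cinner (x - orth_proj M x) m = 0)"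
    using kM orth by simp
  then show ?thesis unfolding M_def .
qed

lemma R_char:
  fixes T :: "('a::chilbert_space \<times> 'b::complex_inner) set"
  assumes f: "f \<in> rdom (radj T)"
  shows "(f, rapp (rreg (radj T)) f) \<in> radj T \<and> (\<forall>m\<in>rmul (radj T). cinner (rapp (rreg (radj T)) f) m = 0)"
proof -
  obtain p where p: "p \<in> radj T" "f = fst p" using f unfolding rdom_def by blast
  obtain g where g: "(f, g) \<in> radj T" using p by (cases p) auto
  have "(f, g - orth_proj (rmul (radj T)) g) \<in> rreg (radj T)" using g unfolding rreg_def by blast
  then have "(f, rapp (rreg (radj T)) f) \<in> rreg (radj T)" unfolding rapp_def by (rule someI)
  then obtain g0 where g0: "(f, g0) \<in> radj T"
    and Rf: "rapp (rreg (radj T)) f = g0 - orth_proj (rmul (radj T)) g0"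
    unfolding rreg_def by auto
  have P: "orth_proj (rmul (radj T)) g0 \<in> rmul (radj T)"
    and O: "\<forall>m\<in>rmul (radj T). cinner (g0 - orth_proj (rmul (radj T)) g0) m = 0"
    using orth_proj_radj[of T g0] by auto
  have "(f - 0, g0 - orth_proj (rmul (radj T)) g0) \<in> radj T"
    using lr_diff[OF radj_lin g0 P[unfolded rmul_radj_iff]] .
  then show ?thesis using Rf O by simp
qed

lemma R_unique:
  fixes T :: "('a::chilbert_space \<times> 'b::complex_inner) set"
  assumes fk: "(f, k) \<in> radj T" and ko: "\<forall>m\<in>rmul (radj T). cinner k m = 0"
  shows "rapp (rreg (radj T)) f = k"
proof -
  let ?R = "rapp (rreg (radj T)) f"
  have f: "f \<in> rdom (radj T)" using fk unfolding rdom_def by (metis fst_conv image_eqI)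
  have c1: "(f, ?R) \<in> radj T" using R_char[OF f] by (rule conjunct1)
  have c2: "\<forall>m\<in>rmul (radj T). cinner ?R m = 0" using R_char[OF f] by (rule conjunct2)
  have "(f - f, ?R - k) \<in> radj T" by (rule lr_diff[OF radj_lin c1 fk])
  then have d: "?R - k \<in> rmul (radj T)" unfolding rmul_radj_iff by simp
  have e1: "cinner ?R (?R - k) = 0" using c2 d by blast
  have e2: "cinner k (?R - k) = 0" using ko d by blast
  have "cinner (?R - k) (?R - k) = cinner ?R (?R - k) - cinner k (?R - k)" by (rule cinner_diff_left)
  then have "cinner (?R - k) (?R - k) = 0" using e1 e2 by simp
  then have "?R - k = 0" by (rule cinner_eq0_imp)
  then show ?thesis by simp
qed

lemma R_diff:
  fixes T :: "('a::chilbert_space \<times> 'b::complex_inner) set"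
  assumes "u \<in> rdom (radj T)" "v \<in> rdom (radj T)"
  shows "rapp (rreg (radj T)) (u - v) = rapp (rreg (radj T)) u - rapp (rreg (radj T)) v"
proof (rule R_unique)
  have cu1: "(u, rapp (rreg (radj T)) u) \<in> radj T" using R_char[OF assms(1)] by (rule conjunct1)
  have cu2: "\<forall>m\<in>rmul (radj T). cinner (rapp (rreg (radj T)) u) m = 0" using R_char[OF assms(1)] by (rule conjunct2)
  have cv1: "(v, rapp (rreg (radj T)) v) \<in> radj T" using R_char[OF assms(2)] by (rule conjunct1)
  have cv2: "\<forall>m\<in>rmul (radj T). cinner (rapp (rreg (radj T)) v) m = 0" using R_char[OF assms(2)] by (rule conjunct2)
  show "(u - v, rapp (rreg (radj T)) u - rapp (rreg (radj T)) v) \<in> radj T"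
    by (rule lr_diff[OF radj_lin cu1 cv1])
  show "\<forall>m\<in>rmul (radj T). cinner (rapp (rreg (radj T)) u - rapp (rreg (radj T)) v) m = 0"
  proof
    fix m assume "m \<in> rmul (radj T)"
    then show "cinner (rapp (rreg (radj T)) u - rapp (rreg (radj T)) v) m = 0"
      using cu2 cv2 by (simp add: cinner_diff_left)
  qed
qed



lemma in_rdom: "(x, y) \<in> T \<Longrightarrow> x \<in> rdom T"
  unfolding rdom_def by (metis fst_conv image_eqI)

lemma rdomE: "x \<in> rdom T \<Longrightarrow> (\<And>y. (x, y) \<in> T \<Longrightarrow> P) \<Longrightarrow> P"
  unfolding rdom_def by (metis imageE prod.collapse)

lemma of_real_norm_sq: "complex_of_real ((norm x)\<^sup>2) = cinner x (x::'a::complex_inner)"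
  by (simp add: cinner_self)

definition sig :: "real \<Rightarrow> 'b::complex_inner \<Rightarrow> 'b \<Rightarrow> 'b \<Rightarrow> complex" where
  "sig c' x x' y = cinner x' y - complex_of_real c' * cinner x y"

locale setting =
  fixes S H :: "('a::chilbert_space \<times> 'a) set"
    and Q :: "'a \<Rightarrow> 'k::chilbert_space"
    and c :: real
  assumes S_lin: "lin_rel S"
    and Q_rep: "representing_map S c Q"
    and H_sa: "selfadjoint H"
    and H_lin: "lin_rel H"
    and S_sub_H: "S \<subseteq> H"
    and H_bb: "bounded_below H c"

context setting
begin

lemma H_adj: "(x, x') \<in> H \<Longrightarrow> (y, y') \<in> H \<Longrightarrow> cinner x' y = cinner x y'"
proof -
  assume x: "(x, x') \<in> H" and y: "(y, y') \<in> H"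
  have "(y, y') \<in> radj H" using y H_sa unfolding selfadjoint_def by simp
  then show ?thesis using x unfolding radj_iff by auto
qed

lemma tform_gen:
  assumes T: "T \<subseteq> H" and x: "(x, x') \<in> T" and y: "y \<in> rdom H"
  shows "tform T x y = cinner x' y"
proof -
  define x'' where "x'' = (SOME z. (x, z) \<in> T)"
  have x2: "(x, x'') \<in> T" unfolding x''_def using x by (rule someI)
  have "(x - x, x'' - x') \<in> H" using lr_diff[OF H_lin] x2 x T by blast
  then have m: "(0, x'' - x') \<in> H" by simp
  obtain y' where y': "(y, y') \<in> H" using y by (rule rdomE)
  have "cinner (x'' - x') y = cinner 0 y'" using H_adj[OF m y'] .
  then have "cinner x'' y = cinner x' y" by (simp add: cinner_diff_left)
  then show ?thesis unfolding tform_def x''_def[symmetric] .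
qed

lemma tformH: "(x, x') \<in> H \<Longrightarrow> y \<in> rdom H \<Longrightarrow> tform H x y = cinner x' y"
  using tform_gen[of H] by blast

lemma tformS: "(x, x') \<in> S \<Longrightarrow> y \<in> rdom H \<Longrightarrow> tform S x y = cinner x' y"
  using tform_gen[OF S_sub_H] by blast

lemma bbH: "(x, x') \<in> H \<Longrightarrow> Im (cinner x' x) = 0 \<and> c * (norm x)\<^sup>2 \<le> Re (cinner x' x)"
  using H_bb unfolding bounded_below_def less_eq_complex_def by fastforce


lemma sig_real: "(x, x') \<in> H \<Longrightarrow> sig c x x' x = complex_of_real (Re (sig c x x' x)) \<and> 0 \<le> Re (sig c x x' x)"
proof -
  assume x: "(x, x') \<in> H"
  have "Im (cinner x' x) = 0" "c * (norm x)\<^sup>2 \<le> Re (cinner x' x)" using bbH[OF x] by auto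
  moreover have "cinner x x = complex_of_real ((norm x)\<^sup>2)" by (rule cinner_self)
  ultimately show ?thesis unfolding sig_def by (simp add: complex_eq_iff)
qed

lemma sig_herm: "(x, x') \<in> H \<Longrightarrow> (y, y') \<in> H \<Longrightarrow> sig c y y' x = cnj (sig c x x' y)"
proof -
  assume x: "(x, x') \<in> H" and y: "(y, y') \<in> H"
  have "cinner y' x = cinner y x'" by (rule H_adj[OF y x])
  also have "\<dots> = cnj (cinner x' y)" by (rule cinner_commute)
  finally show ?thesis unfolding sig_def using cinner_commute[of y x] by simp
qed

lemma sig_expand:
  "sig c (x + a *\<^sub>C y) (x' + a *\<^sub>C y') (x + a *\<^sub>C y) =
    sig c x x' x + cnj a * sig c x x' y + a * sig c y y' x + a * cnj a * sig c y y' y"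
  unfolding sig_def
  by (simp add: cinner_add_left cinner_add_right cinner_scaleC_left cinner_scaleC_right algebra_simps)

lemma sig_cs:
  assumes x: "(x, x') \<in> H" and y: "(y, y') \<in> H"
  shows "(cmod (sig c x x' y))\<^sup>2 \<le> Re (sig c x x' x) * Re (sig c y y' y)"
proof (rule cs_aux)
  show "0 \<le> Re (sig c x x' x)" "0 \<le> Re (sig c y y' y)" using sig_real x y by auto
  fix a
  have xy: "(x + a *\<^sub>C y, x' + a *\<^sub>C y') \<in> H" by (rule lr_comb[OF H_lin x y])
  have "0 \<le> Re (sig c (x + a *\<^sub>C y) (x' + a *\<^sub>C y') (x + a *\<^sub>C y))" using sig_real[OF xy] by blast
  also have "\<dots> = Re (sig c x x' x) + Re (cnj a * sig c x x' y + a * cnj (sig c x x' y))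
      + Re (a * cnj a * complex_of_real (Re (sig c y y' y)))"
    unfolding sig_expand sig_herm[OF x y] using sig_real[OF y] by simp
  also have "\<dots> = Re (sig c x x' x) + 2 * Re (a * cnj (sig c x x' y)) + (cmod a)\<^sup>2 * Re (sig c y y' y)"
    by (simp only: re_cnj_sum re_acnja)
  finally show "0 \<le> Re (sig c x x' x) + 2 * Re (a * cnj (sig c x x' y)) + (cmod a)\<^sup>2 * Re (sig c y y' y)" .
qed

lemma Q_lin: "\<phi> \<in> rdom S \<Longrightarrow> \<psi> \<in> rdom S \<Longrightarrow> Q (a *\<^sub>C \<phi> + b *\<^sub>C \<psi>) = a *\<^sub>C Q \<phi> + b *\<^sub>C Q \<psi>"
  using Q_rep unfolding representing_map_def by blast

lemma Q_add: "\<phi> \<in> rdom S \<Longrightarrow> \<psi> \<in> rdom S \<Longrightarrow> Q (\<phi> + \<psi>) = Q \<phi> + Q \<psi>"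
  using Q_lin[of \<phi> \<psi> 1 1] by (simp add: scaleC_one)

lemma Q_sc: "\<phi> \<in> rdom S \<Longrightarrow> Q (a *\<^sub>C \<phi>) = a *\<^sub>C Q \<phi>"
  using Q_lin[of \<phi> \<phi> a 0] by simp

lemma Q_form: "\<phi> \<in> rdom S \<Longrightarrow> \<psi> \<in> rdom S \<Longrightarrow> tform S \<phi> \<psi> = complex_of_real c * cinner \<phi> \<psi> + cinner (Q \<phi>) (Q \<psi>)"
  using Q_rep unfolding representing_map_def by blast

lemma S_H: "(x, x') \<in> S \<Longrightarrow> (x, x') \<in> H"
  using S_sub_H by blast

lemma QQ: "(\<phi>, \<phi>') \<in> S \<Longrightarrow> cinner \<phi>' \<phi> = complex_of_real c * cinner \<phi> \<phi> + cinner (Q \<phi>) (Q \<phi>)"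
  using Q_form[of \<phi> \<phi>] tformS[of \<phi> \<phi>' \<phi>] in_rdom[of \<phi> \<phi>' S] in_rdom[of \<phi> \<phi>' H] S_H by simp

lemma Js_mem: "(x, y) \<in> radj (companion S c Q) \<longleftrightarrow>
   (\<forall>\<phi> \<phi>'. (\<phi>, \<phi>') \<in> S \<longrightarrow> cinner (\<phi>' - c *\<^sub>R \<phi>) x = cinner (Q \<phi>) y)"
  unfolding radj_def companion_def by auto

lemma M_mem: "m \<in> rmul (radj (companion S c Q)) \<longleftrightarrow> (\<forall>\<phi> \<phi>'. (\<phi>, \<phi>') \<in> S \<longrightarrow> cinner (Q \<phi>) m = 0)"
  unfolding rmul_def Js_mem by simp

end



context setting
begin

abbreviation "Js \<equiv> radj (companion S c Q)"
abbreviation "R \<equiv> rapp (rreg Js)"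

lemma S_add: "p \<in> S \<Longrightarrow> q \<in> S \<Longrightarrow> (fst p + fst q, snd p + snd q) \<in> S"
  using S_lin unfolding lin_rel_def by blast

lemma S_sc: "p \<in> S \<Longrightarrow> (a *\<^sub>C fst p, a *\<^sub>C snd p) \<in> S"
  using S_lin unfolding lin_rel_def by blast

lemma fst_rdom: "p \<in> S \<Longrightarrow> fst p \<in> rdom S"
  unfolding rdom_def by blast

lemma riesz_S:
  fixes L :: "'a \<times> 'a \<Rightarrow> complex" and C :: real
  assumes Ladd: "\<And>p q. p\<in>S \<Longrightarrow> q\<in>S \<Longrightarrow> L (fst p + fst q, snd p + snd q) = L p + L q"
    and Lsc: "\<And>a p. p\<in>S \<Longrightarrow> L (a *\<^sub>C fst p, a *\<^sub>C snd p) = a * L p"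
    and bd: "\<And>p. p\<in>S \<Longrightarrow> cmod (L p) \<le> C * norm (Q (fst p))"
  shows "\<exists>k s. (\<forall>n. s n \<in> S) \<and> (\<lambda>n. Q (fst (s n))) \<longlonglongrightarrow> k \<and> (\<forall>p\<in>S. L p = cinner (Q (fst p)) k)"
proof -
  have "\<exists>k s. (\<forall>n. s n \<in> S) \<and> (\<lambda>n. (\<lambda>p. Q (fst p)) (s n)) \<longlonglongrightarrow> k \<and> (\<forall>p\<in>S. L p = cinner ((\<lambda>p. Q (fst p)) p) k)"
  proof (rule riesz_min[of "(0,0)" S "\<lambda>p q. (fst p + fst q, snd p + snd q)"
        "\<lambda>a p. (a *\<^sub>C fst p, a *\<^sub>C snd p)" "\<lambda>p. Q (fst p)" L C])
    show "(0, 0) \<in> S" by (rule lr_zero[OF S_lin])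
    show "\<And>p q. p \<in> S \<Longrightarrow> q \<in> S \<Longrightarrow> (fst p + fst q, snd p + snd q) \<in> S" by (rule S_add)
    show "\<And>a p. p \<in> S \<Longrightarrow> (a *\<^sub>C fst p, a *\<^sub>C snd p) \<in> S" by (rule S_sc)
    show "\<And>p q. p \<in> S \<Longrightarrow> q \<in> S \<Longrightarrow> Q (fst (fst p + fst q, snd p + snd q)) = Q (fst p) + Q (fst q)"
      using Q_add fst_rdom by simp
    show "\<And>a p. p \<in> S \<Longrightarrow> Q (fst (a *\<^sub>C fst p, a *\<^sub>C snd p)) = a *\<^sub>C Q (fst p)"
      using Q_sc fst_rdom by simp
    show "\<And>p q. p \<in> S \<Longrightarrow> q \<in> S \<Longrightarrow> L (fst p + fst q, snd p + snd q) = L p + L q" by (rule Ladd)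
    show "\<And>a p. p \<in> S \<Longrightarrow> L (a *\<^sub>C fst p, a *\<^sub>C snd p) = a * L p" by (rule Lsc)
    show "\<And>p. p \<in> S \<Longrightarrow> cmod (L p) \<le> C * norm (Q (fst p))" by (rule bd)
  qed
  then show ?thesis by simp
qed

lemma dom_Js:
  assumes f: "(f, f') \<in> H"
  shows "f \<in> rdom Js"
proof -
  define C where "C = sqrt (Re (sig c f f' f))"
  have bd: "cmod (cinner (snd p - c *\<^sub>R fst p) f) \<le> C * norm (Q (fst p))" if p: "p \<in> S" for p
  proof -
    obtain \<phi> \<phi>' where pe: "p = (\<phi>, \<phi>')" by (cases p)
    have pS: "(\<phi>, \<phi>') \<in> S" using p pe by simp
    have pH: "(\<phi>, \<phi>') \<in> H" by (rule S_H[OF pS])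
    have "cinner (\<phi>' - c *\<^sub>R \<phi>) f = cinner \<phi>' f - complex_of_real c * cinner \<phi> f"
      by (simp add: cinner_diff_left cinner_scaleR_left)
    also have "cinner \<phi>' f = cinner \<phi> f'" by (rule H_adj[OF pH f])
    also have "cinner \<phi> f' - complex_of_real c * cinner \<phi> f = cnj (sig c f f' \<phi>)"
      unfolding sig_def using cinner_commute[of \<phi> f'] cinner_commute[of \<phi> f] by simp
    finally have e: "cinner (\<phi>' - c *\<^sub>R \<phi>) f = cnj (sig c f f' \<phi>)" .
    have "(cmod (sig c f f' \<phi>))\<^sup>2 \<le> Re (sig c f f' f) * Re (sig c \<phi> \<phi>' \<phi>)" by (rule sig_cs[OF f pH])
    moreover have "Re (sig c \<phi> \<phi>' \<phi>) = (norm (Q \<phi>))\<^sup>2"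
      unfolding sig_def using QQ[OF pS] by (simp add: cinner_self)
    ultimately have "(cmod (sig c f f' \<phi>))\<^sup>2 \<le> Re (sig c f f' f) * (norm (Q \<phi>))\<^sup>2" by simp
    then have "sqrt ((cmod (sig c f f' \<phi>))\<^sup>2) \<le> sqrt (Re (sig c f f' f) * (norm (Q \<phi>))\<^sup>2)"
      by (rule real_sqrt_le_mono)
    then have "cmod (sig c f f' \<phi>) \<le> C * norm (Q \<phi>)" unfolding C_def by (simp add: real_sqrt_mult)
    then show ?thesis using e pe by simp
  qed
  have "\<exists>k s. (\<forall>n. s n \<in> S) \<and> (\<lambda>n. Q (fst (s n))) \<longlonglongrightarrow> k \<and>
      (\<forall>p\<in>S. cinner (snd p - c *\<^sub>R fst p) f = cinner (Q (fst p)) k)"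
  proof (rule riesz_S)
    fix p q assume "p \<in> S" "q \<in> S"
    show "cinner (snd (fst p + fst q, snd p + snd q) - c *\<^sub>R fst (fst p + fst q, snd p + snd q)) f =
        cinner (snd p - c *\<^sub>R fst p) f + cinner (snd q - c *\<^sub>R fst q) f"
      by (simp add: cinner_add_left cinner_diff_left cinner_scaleR_left scaleR_add_right algebra_simps)
  next
    fix a p assume "p \<in> S"
    show "cinner (snd (a *\<^sub>C fst p, a *\<^sub>C snd p) - c *\<^sub>R fst (a *\<^sub>C fst p, a *\<^sub>C snd p)) f =
        a * cinner (snd p - c *\<^sub>R fst p) f"
      by (simp add: cinner_diff_left cinner_scaleR_left cinner_scaleC_left algebra_simps)
  next
    fix p assume "p \<in> S" then show "cmod (cinner (snd p - c *\<^sub>R fst p) f) \<le> C * norm (Q (fst p))" by (rule bd)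
  qed
  then obtain k where k: "\<forall>p\<in>S. cinner (snd p - c *\<^sub>R fst p) f = cinner (Q (fst p)) k" by blast
  have "(f, k) \<in> Js" unfolding Js_mem using k by fastforce
  then show ?thesis by (rule in_rdom)
qed

lemma R_closure:
  assumes f: "f \<in> rdom Js"
  shows "\<exists>s. (\<forall>n. s n \<in> S) \<and> (\<lambda>n. Q (fst (s n))) \<longlonglongrightarrow> R f"
proof -
  have "\<exists>k s. (\<forall>n. s n \<in> S) \<and> (\<lambda>n. Q (fst (s n))) \<longlonglongrightarrow> k \<and>
      (\<forall>p\<in>S. cinner (Q (fst p)) (R f) = cinner (Q (fst p)) k)"
  proof (rule riesz_S)
    fix p q assume "p \<in> S" "q \<in> S"
    then show "cinner (Q (fst (fst p + fst q, snd p + snd q))) (R f) =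
        cinner (Q (fst p)) (R f) + cinner (Q (fst q)) (R f)"
      using Q_add fst_rdom by (simp add: cinner_add_left)
  next
    fix a p assume "p \<in> S"
    then show "cinner (Q (fst (a *\<^sub>C fst p, a *\<^sub>C snd p))) (R f) = a * cinner (Q (fst p)) (R f)"
      using Q_sc fst_rdom by (simp add: cinner_scaleC_left)
  next
    fix p assume "p \<in> S"
    show "cmod (cinner (Q (fst p)) (R f)) \<le> norm (R f) * norm (Q (fst p))"
      using cinner_cs[of "Q (fst p)" "R f"] by (simp add: mult.commute)
  qed
  then obtain k s where s: "\<forall>n. s n \<in> S" and sl: "(\<lambda>n. Q (fst (s n))) \<longlonglongrightarrow> k"
    and ks: "\<forall>p\<in>S. cinner (Q (fst p)) (R f) = cinner (Q (fst p)) k" by blast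
  have Rc1: "(f, R f) \<in> Js" using R_char[OF f] by (rule conjunct1)
  have Rc2: "\<forall>m\<in>rmul Js. cinner (R f) m = 0" using R_char[OF f] by (rule conjunct2)
  have dM: "R f - k \<in> rmul Js"
    unfolding M_mem
  proof (intro allI impI)
    fix \<phi> \<phi>' assume "(\<phi>, \<phi>') \<in> S"
    then have "cinner (Q \<phi>) (R f) = cinner (Q \<phi>) k" using ks by fastforce
    then show "cinner (Q \<phi>) (R f - k) = 0" by (simp add: cinner_diff_right)
  qed
  have kM: "cinner k m = 0" if m: "m \<in> rmul Js" for m
  proof -
    have z: "cinner (Q (fst (s n))) m = 0" for n
    proof -
      have "(fst (s n), snd (s n)) \<in> S" using s by simp
      then show ?thesis using m unfolding M_mem by blast
    qed
    have "(\<lambda>n. cinner (Q (fst (s n))) m) \<longlonglongrightarrow> cinner k m" by (intro tendsto_cinner sl tendsto_const)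
    then have "(\<lambda>n. 0) \<longlonglongrightarrow> cinner k m" using z by simp
    then show ?thesis using LIMSEQ_unique tendsto_const by metis
  qed
  have e1: "cinner (R f) (R f - k) = 0" using Rc2 dM by blast
  have e2: "cinner k (R f - k) = 0" using kM dM by blast
  have "cinner (R f - k) (R f - k) = cinner (R f) (R f - k) - cinner k (R f - k)" by (rule cinner_diff_left)
  then have "cinner (R f - k) (R f - k) = 0" using e1 e2 by simp
  then have "R f - k = 0" by (rule cinner_eq0_imp)
  then show ?thesis using s sl by auto
qed

lemma part_a:
  assumes h: "(h, h') \<in> S" and f: "(f, f') \<in> H" and fd: "f \<in> rdom Js"
  shows "tform H (f - h) (f - h) - complex_of_real (c * (norm (f - h))\<^sup>2)
          - complex_of_real ((norm (R f - Q h))\<^sup>2)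
        = tform H f f - complex_of_real (c * (norm f)\<^sup>2)
          - complex_of_real ((norm (R f))\<^sup>2)"
proof -
  have hH: "(h, h') \<in> H" by (rule S_H[OF h])
  have fh: "(f - h, f' - h') \<in> H" by (rule lr_diff[OF H_lin f hH])
  have T1: "tform H (f - h) (f - h) = cinner (f' - h') (f - h)" by (rule tformH[OF fh in_rdom[OF fh]])
  have T2: "tform H f f = cinner f' f" by (rule tformH[OF f in_rdom[OF f]])
  have hh: "cinner h' h = complex_of_real c * cinner h h + cinner (Q h) (Q h)" by (rule QQ[OF h])
  have adj: "cinner h' f = cinner h f'" by (rule H_adj[OF hH f])
  have Rc1: "(f, R f) \<in> Js" using R_char[OF fd] by (rule conjunct1)
  have "cinner (h' - c *\<^sub>R h) f = cinner (Q h) (R f)" using Rc1 h unfolding Js_mem by blast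
  then have Jr: "cinner (Q h) (R f) = cinner h' f - complex_of_real c * cinner h f"
    by (simp add: cinner_diff_left cinner_scaleR_left)
  have c1: "cinner f' h = cnj (cinner h' f)" using adj cinner_commute[of f' h] by simp
  have c2: "cinner f h = cnj (cinner h f)" by (rule cinner_commute)
  have c3: "cinner (R f) (Q h) = cnj (cinner (Q h) (R f))" by (rule cinner_commute)
  have n1: "complex_of_real ((norm (f - h))\<^sup>2) = cinner (f - h) (f - h)" by (rule of_real_norm_sq)
  have n2: "complex_of_real ((norm (R f - Q h))\<^sup>2) = cinner (R f - Q h) (R f - Q h)" by (rule of_real_norm_sq)
  have n3: "complex_of_real ((norm f)\<^sup>2) = cinner f f" by (rule of_real_norm_sq)
  have n4: "complex_of_real ((norm (R f))\<^sup>2) = cinner (R f) (R f)" by (rule of_real_norm_sq)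
  show ?thesis
    unfolding of_real_mult n1 n2 n3 n4 T1 T2
    unfolding cinner_diff_left cinner_diff_right c1 c2 c3 hh Jr
    by (simp add: algebra_simps)
qed

end



lemma complex_le_of_diff: "(0::complex) \<le> a - b \<Longrightarrow> b \<le> a"
  by (simp add: less_eq_complex_def)

context setting
begin

lemma D_nonneg:
  assumes f: "(f, f') \<in> H" and fd: "f \<in> rdom Js"
  shows "0 \<le> tform H f f - complex_of_real (c * (norm f)\<^sup>2) - complex_of_real ((norm (R f))\<^sup>2)"
    (is "0 \<le> ?D")
proof -
  have T2: "tform H f f = cinner f' f" by (rule tformH[OF f in_rdom[OF f]])
  have imD: "Im ?D = 0" using bbH[OF f] T2 by simp
  obtain s where s: "\<forall>n. s n \<in> S" and sl: "(\<lambda>n. Q (fst (s n))) \<longlonglongrightarrow> R f"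
    using R_closure[OF fd] by blast
  have low: "- (norm (R f - Q (fst (s n))))\<^sup>2 \<le> Re ?D" for n
  proof -
    define h h' where "h = fst (s n)" and "h' = snd (s n)"
    have hS: "(h, h') \<in> S" using s unfolding h_def h'_def by simp
    have fh: "(f - h, f' - h') \<in> H" by (rule lr_diff[OF H_lin f S_H[OF hS]])
    have "tform H (f - h) (f - h) = cinner (f' - h') (f - h)" by (rule tformH[OF fh in_rdom[OF fh]])
    then have X: "0 \<le> Re (tform H (f - h) (f - h) - complex_of_real (c * (norm (f - h))\<^sup>2))"
      using bbH[OF fh] by simp
    have "?D = tform H (f - h) (f - h) - complex_of_real (c * (norm (f - h))\<^sup>2)
          - complex_of_real ((norm (R f - Q h))\<^sup>2)" by (rule part_a[OF hS f fd, symmetric])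
    then have "Re ?D = Re (tform H (f - h) (f - h) - complex_of_real (c * (norm (f - h))\<^sup>2))
          - (norm (R f - Q h))\<^sup>2" by simp
    then show ?thesis using X unfolding h_def by linarith
  qed
  have "(\<lambda>n. - (norm (R f - Q (fst (s n))))\<^sup>2) \<longlonglongrightarrow> - (norm (R f - R f))\<^sup>2"
    by (intro tendsto_intros sl)
  then have "(\<lambda>n. - (norm (R f - Q (fst (s n))))\<^sup>2) \<longlonglongrightarrow> 0" by simp
  then have "0 \<le> Re ?D" by (rule LIMSEQ_le_const2) (use low in blast)
  then show ?thesis using imD by (simp add: less_eq_complex_def)
qed

lemma part_b:
  assumes f: "(f, f') \<in> H" and h: "(h, h') \<in> S"
  shows "f \<in> rdom Js \<and>
        tform H (f - h) (f - h) - complex_of_real (c * (norm (f - h))\<^sup>2)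
          \<ge> complex_of_real ((norm (R f - Q h))\<^sup>2)"
proof
  show fd: "f \<in> rdom Js" by (rule dom_Js[OF f])
  show "tform H (f - h) (f - h) - complex_of_real (c * (norm (f - h))\<^sup>2)
          \<ge> complex_of_real ((norm (R f - Q h))\<^sup>2)"
  proof (rule complex_le_of_diff)
    show "0 \<le> tform H (f - h) (f - h) - complex_of_real (c * (norm (f - h))\<^sup>2)
          - complex_of_real ((norm (R f - Q h))\<^sup>2)"
      by (subst part_a[OF h f fd]) (rule D_nonneg[OF f fd])
  qed
qed

abbreviation "K \<equiv> krein_ext S c Q"

lemma K_elem: "(u, w') \<in> K \<Longrightarrow> \<exists>k w. (u, k) \<in> Js \<and> (k, w) \<in> radj Js \<and> w' = w + c *\<^sub>R u"
proof -
  assume "(u, w') \<in> K"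
  then obtain f g where e: "(u, w') = (f, g + c *\<^sub>R f)" and fg: "(f, g) \<in> rprod (radj Js) Js"
    unfolding krein_ext_def rshift_def by blast
  from fg obtain k where "(f, k) \<in> Js" "(k, g) \<in> radj Js" unfolding rprod_def by blast
  then show ?thesis using e by blast
qed

lemma K_intro: "(u, k) \<in> Js \<Longrightarrow> (k, w) \<in> radj Js \<Longrightarrow> (u, w + c *\<^sub>R u) \<in> K"
proof -
  assume "(u, k) \<in> Js" "(k, w) \<in> radj Js"
  then have "(u, w) \<in> rprod (radj Js) Js" unfolding rprod_def by blast
  then show ?thesis unfolding krein_ext_def rshift_def by blast
qed

lemma K_domJs: "u \<in> rdom K \<Longrightarrow> u \<in> rdom Js"
proof -
  assume "u \<in> rdom K"
  then obtain w' where "(u, w') \<in> K" by (rule rdomE)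
  then obtain k where "(u, k) \<in> Js" using K_elem by blast
  then show ?thesis by (rule in_rdom)
qed

lemma K_diff: "u \<in> rdom K \<Longrightarrow> v \<in> rdom K \<Longrightarrow> u - v \<in> rdom K"
proof -
  assume "u \<in> rdom K" "v \<in> rdom K"
  then obtain wu wv where "(u, wu) \<in> K" "(v, wv) \<in> K" by (meson rdomE)
  then obtain k1 w1 k2 w2 where a: "(u, k1) \<in> Js" "(k1, w1) \<in> radj Js"
    and b: "(v, k2) \<in> Js" "(k2, w2) \<in> radj Js" using K_elem by blast
  have "(u - v, k1 - k2) \<in> Js" by (rule lr_diff[OF radj_lin a(1) b(1)])
  moreover have "(k1 - k2, w1 - w2) \<in> radj Js" by (rule lr_diff[OF radj_lin a(2) b(2)])
  ultimately have "(u - v, (w1 - w2) + c *\<^sub>R (u - v)) \<in> K" by (rule K_intro)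
  then show ?thesis by (rule in_rdom)
qed

lemma tformK:
  assumes u: "u \<in> rdom K" and v: "v \<in> rdom K"
  shows "tform K u v = complex_of_real c * cinner u v + cinner (R u) (R v)"
proof -
  define w' where "w' = (SOME z. (u, z) \<in> K)"
  obtain z where "(u, z) \<in> K" using u by (rule rdomE)
  then have uw: "(u, w') \<in> K" unfolding w'_def by (rule someI)
  obtain k w where kw: "(u, k) \<in> Js" "(k, w) \<in> radj Js" "w' = w + c *\<^sub>R u" using K_elem[OF uw] by blast
  have ud: "u \<in> rdom Js" by (rule K_domJs[OF u])
  have vd: "v \<in> rdom Js" by (rule K_domJs[OF v])
  have Rv1: "(v, R v) \<in> Js" using R_char[OF vd] by (rule conjunct1)
  have Rv2: "\<forall>m\<in>rmul Js. cinner (R v) m = 0" using R_char[OF vd] by (rule conjunct2)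
  have Ru1: "(u, R u) \<in> Js" using R_char[OF ud] by (rule conjunct1)
  have "cinner (R v) k = cinner v w" using kw(2) Rv1 unfolding radj_iff[of k w] by blast
  then have e1: "cinner w v = cinner k (R v)"
    using cinner_commute[of w v] cinner_commute[of k "R v"] by simp
  have "(u - u, k - R u) \<in> Js" by (rule lr_diff[OF radj_lin kw(1) Ru1])
  then have "k - R u \<in> rmul Js" unfolding rmul_radj_iff by simp
  then have "cinner (R v) (k - R u) = 0" using Rv2 by blast
  then have "cinner (k - R u) (R v) = 0" using cinner_commute[of "k - R u" "R v"] by simp
  then have e2: "cinner k (R v) = cinner (R u) (R v)" by (simp add: cinner_diff_left)
  have "tform K u v = cinner w' v" unfolding tform_def w'_def ..
  also have "\<dots> = cinner w v + complex_of_real c * cinner u v"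
    using kw(3) by (simp add: cinner_add_left cinner_scaleR_left)
  finally show ?thesis using e1 e2 by simp
qed

end



lemma cauchy_split:
  fixes s :: "nat \<Rightarrow> 'x::real_normed_vector" and a :: "nat \<Rightarrow> nat \<Rightarrow> real" and c :: real
  assumes A: "\<forall>e>0. \<exists>N. \<forall>n\<ge>N. \<forall>m\<ge>N. a n m < e" and Cs: "Cauchy s"
  shows "\<forall>e>0. \<exists>N. \<forall>n\<ge>N. \<forall>m\<ge>N. a n m + \<bar>c\<bar> * (norm (s n - s m))\<^sup>2 < e"
proof (intro allI impI)
  fix e :: real assume e: "0 < e"
  obtain N1 where N1: "\<forall>n\<ge>N1. \<forall>m\<ge>N1. a n m < e / 2" using A e by (meson half_gt_zero)
  define \<delta> where "\<delta> = sqrt (e / (2 * (\<bar>c\<bar> + 1)))"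
  have dpos: "\<delta> > 0" unfolding \<delta>_def using e by (simp add: add_pos_nonneg)
  have d2: "\<delta>\<^sup>2 = e / (2 * (\<bar>c\<bar> + 1))" unfolding \<delta>_def using e by (simp add: add_pos_nonneg)
  obtain N2 where N2: "\<forall>m\<ge>N2. \<forall>n\<ge>N2. norm (s m - s n) < \<delta>" using CauchyD[OF Cs dpos] by blast
  show "\<exists>N. \<forall>n\<ge>N. \<forall>m\<ge>N. a n m + \<bar>c\<bar> * (norm (s n - s m))\<^sup>2 < e"
  proof (intro exI allI impI)
    fix n m assume n: "max N1 N2 \<le> n" and m: "max N1 N2 \<le> m"
    have "norm (s n - s m) < \<delta>" using N2 n m by auto
    then have "(norm (s n - s m))\<^sup>2 < \<delta>\<^sup>2" by (simp add: power_strict_mono)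
    then have "(\<bar>c\<bar> + 1) * (norm (s n - s m))\<^sup>2 < (\<bar>c\<bar> + 1) * \<delta>\<^sup>2"
      by (intro mult_strict_left_mono) auto
    also have "(\<bar>c\<bar> + 1) * \<delta>\<^sup>2 = e / 2" unfolding d2 by (simp add: field_simps add_pos_nonneg)
    finally have lt: "(\<bar>c\<bar> + 1) * (norm (s n - s m))\<^sup>2 < e / 2" .
    have "\<bar>c\<bar> * (norm (s n - s m))\<^sup>2 \<le> (\<bar>c\<bar> + 1) * (norm (s n - s m))\<^sup>2"
      by (intro mult_right_mono) auto
    then have "\<bar>c\<bar> * (norm (s n - s m))\<^sup>2 < e / 2" using lt by linarith
    moreover have "a n m < e / 2" using N1 n m by auto
    ultimately show "a n m + \<bar>c\<bar> * (norm (s n - s m))\<^sup>2 < e" by linarith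
  qed
qed

lemma form_conv_unfold:
  "form_conv (rel_form T) f s \<longleftrightarrow> (\<forall>n. s n \<in> rdom T) \<and> s \<longlonglongrightarrow> f \<and>
     (\<forall>e>0. \<exists>N. \<forall>n\<ge>N. \<forall>m\<ge>N. norm (tform T (s n - s m) (s n - s m)) < e)"
  unfolding form_conv_def rel_form_def by simp

context setting
begin

lemma K_conv:
  assumes fc: "form_conv (rel_form K) f s"
  shows "f \<in> rdom Js \<and> (\<lambda>n. R (s n)) \<longlonglongrightarrow> R f"
proof -
  have sK: "\<And>n. s n \<in> rdom K" and sl: "s \<longlonglongrightarrow> f"
    and fC: "\<forall>e>0. \<exists>N. \<forall>n\<ge>N. \<forall>m\<ge>N. norm (tform K (s n - s m) (s n - s m)) < e"
    using fc unfolding form_conv_unfold by auto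
  have sJ: "\<And>n. s n \<in> rdom Js" using sK K_domJs by blast
  have key: "(norm (R (s n) - R (s m)))\<^sup>2 \<le> norm (tform K (s n - s m) (s n - s m)) + \<bar>c\<bar> * (norm (s n - s m))\<^sup>2"
    for n m
  proof -
    define d where "d = s n - s m"
    have dK: "d \<in> rdom K" unfolding d_def by (rule K_diff[OF sK sK])
    have Rd: "R d = R (s n) - R (s m)" unfolding d_def by (rule R_diff[OF sJ sJ])
    have "tform K d d = complex_of_real c * cinner d d + cinner (R d) (R d)" by (rule tformK[OF dK dK])
    then have "Re (tform K d d) = c * (norm d)\<^sup>2 + (norm (R d))\<^sup>2" by (simp add: cinner_self)
    moreover have "Re (tform K d d) \<le> norm (tform K d d)" by (rule complex_Re_le_cmod)
    moreover have "- c * (norm d)\<^sup>2 \<le> \<bar>c\<bar> * (norm d)\<^sup>2"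
      by (intro mult_right_mono) auto
    ultimately show ?thesis unfolding Rd[symmetric] d_def[symmetric] by linarith
  qed
  have cau: "Cauchy (\<lambda>n. R (s n))"
  proof (rule CauchyI)
    fix e :: real assume e: "0 < e"
    have "\<forall>e>0. \<exists>N. \<forall>n\<ge>N. \<forall>m\<ge>N. norm (tform K (s n - s m) (s n - s m)) + \<bar>c\<bar> * (norm (s n - s m))\<^sup>2 < e"
      by (rule cauchy_split[OF fC LIMSEQ_imp_Cauchy[OF sl]])
    then obtain N where N: "\<forall>n\<ge>N. \<forall>m\<ge>N. norm (tform K (s n - s m) (s n - s m)) + \<bar>c\<bar> * (norm (s n - s m))\<^sup>2 < e\<^sup>2"
      using e by (meson zero_less_power)
    show "\<exists>M. \<forall>m\<ge>M. \<forall>n\<ge>M. norm (R (s m) - R (s n)) < e"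
    proof (intro exI allI impI)
      fix m n assume "N \<le> m" "N \<le> n"
      then have "(norm (R (s m) - R (s n)))\<^sup>2 < e\<^sup>2" using key[of m n] N by fastforce
      then show "norm (R (s m) - R (s n)) < e" using e by (simp add: power_less_imp_less_base)
    qed
  qed
  then obtain r0 where r0: "(\<lambda>n. R (s n)) \<longlonglongrightarrow> r0" using Cauchy_convergent_iff convergent_def by blast
  have "(f, r0) \<in> Js"
  proof (rule radj_limit[where x=s and y="\<lambda>n. R (s n)"])
    fix n show "(s n, R (s n)) \<in> Js" using R_char[OF sJ] by (rule conjunct1)
  qed (use sl r0 in auto)
  moreover have "\<forall>m\<in>rmul Js. cinner r0 m = 0"
  proof
    fix m assume m: "m \<in> rmul Js"
    have z: "cinner (R (s n)) m = 0" for n using R_char[OF sJ[of n]] m by blast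
    have "(\<lambda>n. cinner (R (s n)) m) \<longlonglongrightarrow> cinner r0 m" by (intro tendsto_cinner r0 tendsto_const)
    then have "(\<lambda>n. 0) \<longlonglongrightarrow> cinner r0 m" using z by simp
    then show "cinner r0 m = 0" using LIMSEQ_unique tendsto_const by metis
  qed
  ultimately have "R f = r0" by (rule R_unique)
  moreover have "f \<in> rdom Js" using \<open>(f, r0) \<in> Js\<close> by (rule in_rdom)
  ultimately show ?thesis using r0 by simp
qed

lemma closedK_val:
  assumes fK: "f \<in> fst (closed_form K)"
  shows "snd (closed_form K) f f = complex_of_real c * cinner f f + cinner (R f) (R f)"
proof -
  let ?v0 = "complex_of_real c * cinner f f + cinner (R f) (R f)"
  obtain s0 where s0: "form_conv (rel_form K) f s0"
    using fK unfolding closed_form_def form_closure_def by auto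
  have P: "(\<lambda>n. tform K (s n) (s' n)) \<longlonglongrightarrow> ?v0"
    if s: "form_conv (rel_form K) f s" and s': "form_conv (rel_form K) f s'" for s s'
  proof -
    have sK: "\<And>n. s n \<in> rdom K" and sl: "s \<longlonglongrightarrow> f" using s unfolding form_conv_unfold by auto
    have sK': "\<And>n. s' n \<in> rdom K" and sl': "s' \<longlonglongrightarrow> f" using s' unfolding form_conv_unfold by auto
    have e: "tform K (s n) (s' n) = complex_of_real c * cinner (s n) (s' n) + cinner (R (s n)) (R (s' n))" for n
      by (rule tformK[OF sK sK'])
    have "(\<lambda>n. complex_of_real c * cinner (s n) (s' n) + cinner (R (s n)) (R (s' n))) \<longlonglongrightarrow> ?v0"
      using K_conv[OF s] K_conv[OF s'] by (intro tendsto_intros tendsto_cinner sl sl') auto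
    then show ?thesis unfolding e .
  qed
  have "(THE v. \<forall>s s'. form_conv (rel_form K) f s \<longrightarrow> form_conv (rel_form K) f s' \<longrightarrow>
            (\<lambda>n. tform K (s n) (s' n)) \<longlonglongrightarrow> v) = ?v0"
  proof (rule the_equality)
    show "\<forall>s s'. form_conv (rel_form K) f s \<longrightarrow> form_conv (rel_form K) f s' \<longrightarrow>
            (\<lambda>n. tform K (s n) (s' n)) \<longlonglongrightarrow> ?v0" using P by blast
  next
    fix v assume "\<forall>s s'. form_conv (rel_form K) f s \<longrightarrow> form_conv (rel_form K) f s' \<longrightarrow>
            (\<lambda>n. tform K (s n) (s' n)) \<longlonglongrightarrow> v"
    then have "(\<lambda>n. tform K (s0 n) (s0 n)) \<longlonglongrightarrow> v" using s0 by blast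
    moreover have "(\<lambda>n. tform K (s0 n) (s0 n)) \<longlonglongrightarrow> ?v0" using P[OF s0 s0] .
    ultimately show "v = ?v0" by (rule LIMSEQ_unique)
  qed
  then show ?thesis unfolding closed_form_def form_closure_def rel_form_def by simp
qed

end



context setting
begin

lemma sig_split: "sig c x x' y = sig c x x' (y - z) + sig c x x' z"
  unfolding sig_def by (simp add: cinner_diff_right algebra_simps)

lemma H_sig0:
  assumes f: "(f, f') \<in> H" and fc: "form_conv (rel_form H) f s" and s1: "\<And>n. (s n, s1 n) \<in> H"
  shows "(\<lambda>n. Re (sig c (s n - f) (s1 n - f') (s n - f))) \<longlonglongrightarrow> 0"
proof -
  define u where "u n = s n - f" for n
  define u1 where "u1 n = s1 n - f'" for n
  define Sn where "Sn n = Re (sig c (u n) (u1 n) (u n))" for n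
  have sl: "s \<longlonglongrightarrow> f"
    and fC: "\<forall>e>0. \<exists>N. \<forall>n\<ge>N. \<forall>m\<ge>N. norm (tform H (s n - s m) (s n - s m)) < e"
    using fc unfolding form_conv_unfold by auto
  have uH: "(u n, u1 n) \<in> H" for n unfolding u_def u1_def by (rule lr_diff[OF H_lin s1 f])
  have Snn: "0 \<le> Sn n" for n unfolding Sn_def using sig_real[OF uH] by blast
  have ul: "u \<longlonglongrightarrow> 0"
  proof -
    have "(\<lambda>n. s n - f) \<longlonglongrightarrow> f - f" by (intro tendsto_intros sl)
    then show ?thesis unfolding u_def by simp
  qed
  have dH: "(s n - s m, s1 n - s1 m) \<in> H" for n m by (rule lr_diff[OF H_lin s1 s1])
  have bound1: "Re (sig c (s n - s m) (s1 n - s1 m) (s n - s m)) \<le>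
      norm (tform H (s n - s m) (s n - s m)) + \<bar>c\<bar> * (norm (s n - s m))\<^sup>2" for n m
  proof -
    define d where "d = s n - s m"
    define d1 where "d1 = s1 n - s1 m"
    have dd: "(d, d1) \<in> H" unfolding d_def d1_def by (rule dH)
    have "tform H d d = cinner d1 d" by (rule tformH[OF dd in_rdom[OF dd]])
    then have "Re (sig c d d1 d) = Re (tform H d d) - c * (norm d)\<^sup>2"
      unfolding sig_def by (simp add: cinner_self)
    moreover have "Re (tform H d d) \<le> norm (tform H d d)" by (rule complex_Re_le_cmod)
    moreover have "- c * (norm d)\<^sup>2 \<le> \<bar>c\<bar> * (norm d)\<^sup>2" by (intro mult_right_mono) auto
    ultimately show ?thesis unfolding d_def d1_def by linarith
  qed
  have cs: "\<forall>e>0. \<exists>N. \<forall>n\<ge>N. \<forall>m\<ge>N. norm (tform H (s n - s m) (s n - s m)) + \<bar>c\<bar> * (norm (s n - s m))\<^sup>2 < e"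
    by (rule cauchy_split[OF fC LIMSEQ_imp_Cauchy[OF sl]])
  have main: "\<exists>N. \<forall>n\<ge>N. Sn n \<le> \<epsilon>\<^sup>2" if eps: "\<epsilon> > 0" for \<epsilon>
  proof -
    obtain N where N: "\<forall>n\<ge>N. \<forall>m\<ge>N. norm (tform H (s n - s m) (s n - s m)) + \<bar>c\<bar> * (norm (s n - s m))\<^sup>2 < \<epsilon>\<^sup>2"
      using cs eps by (meson zero_less_power)
    have "Sn n \<le> \<epsilon>\<^sup>2" if n: "N \<le> n" for n
    proof -
      have le: "Sn n - sqrt (Sn n) * \<epsilon> \<le> cmod (sig c (u n) (u1 n) (u m))" if m: "N \<le> m" for m
      proof -
        have um: "u n - u m = s n - s m" "u1 n - u1 m = s1 n - s1 m" unfolding u_def u1_def by simp_all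
        have "(cmod (sig c (u n) (u1 n) (u n - u m)))\<^sup>2 \<le>
              Re (sig c (u n) (u1 n) (u n)) * Re (sig c (u n - u m) (u1 n - u1 m) (u n - u m))"
          by (rule sig_cs[OF uH]) (unfold um, rule dH)
        also have "Re (sig c (u n - u m) (u1 n - u1 m) (u n - u m)) \<le> \<epsilon>\<^sup>2"
          using bound1[of n m] N n m unfolding um by fastforce
        then have "Re (sig c (u n) (u1 n) (u n)) * Re (sig c (u n - u m) (u1 n - u1 m) (u n - u m))
            \<le> Sn n * \<epsilon>\<^sup>2" unfolding Sn_def[symmetric] using Snn by (intro mult_left_mono) auto
        finally have "(cmod (sig c (u n) (u1 n) (u n - u m)))\<^sup>2 \<le> Sn n * \<epsilon>\<^sup>2" .
        then have "sqrt ((cmod (sig c (u n) (u1 n) (u n - u m)))\<^sup>2) \<le> sqrt (Sn n * \<epsilon>\<^sup>2)"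
          by (rule real_sqrt_le_mono)
        then have a: "cmod (sig c (u n) (u1 n) (u n - u m)) \<le> sqrt (Sn n) * \<epsilon>"
          using eps by (simp add: real_sqrt_mult)
        have "Sn n = Re (sig c (u n) (u1 n) (u n - u m) + sig c (u n) (u1 n) (u m))"
          unfolding Sn_def using sig_split[of "u n" "u1 n" "u n" "u m"] by simp
        also have "\<dots> \<le> cmod (sig c (u n) (u1 n) (u n - u m)) + cmod (sig c (u n) (u1 n) (u m))"
          using complex_Re_le_cmod[of "sig c (u n) (u1 n) (u n - u m) + sig c (u n) (u1 n) (u m)"]
            norm_triangle_ineq[of "sig c (u n) (u1 n) (u n - u m)" "sig c (u n) (u1 n) (u m)"] by linarith
        finally show ?thesis using a by linarith
      qed
      have "(\<lambda>m. cmod (sig c (u n) (u1 n) (u m))) \<longlonglongrightarrow> cmod (sig c (u n) (u1 n) 0)"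
        unfolding sig_def by (intro tendsto_intros tendsto_cinner ul)
      then have "(\<lambda>m. cmod (sig c (u n) (u1 n) (u m))) \<longlonglongrightarrow> 0" by (simp add: sig_def)
      then have q: "Sn n - sqrt (Sn n) * \<epsilon> \<le> 0" by (rule LIMSEQ_le_const) (use le in blast)
      show ?thesis
      proof (cases "Sn n = 0")
        case True then show ?thesis by simp
      next
        case False
        then have qp: "sqrt (Sn n) > 0" using Snn[of n] by simp
        have sq: "Sn n = sqrt (Sn n) * sqrt (Sn n)" using Snn[of n] by simp
        have hh: "sqrt (Sn n) * sqrt (Sn n) \<le> sqrt (Sn n) * \<epsilon>" using q sq by linarith
        have "sqrt (Sn n) \<le> \<epsilon>" using mult_le_cancel_left_pos[OF qp] hh by blast
        then have "sqrt (Sn n) * sqrt (Sn n) \<le> \<epsilon> * \<epsilon>" using qp eps by (intro mult_mono) auto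
        then show ?thesis using sq by (simp add: power2_eq_square)
      qed
    qed
    then show ?thesis by blast
  qed
  have "Sn \<longlonglongrightarrow> 0"
  proof (rule LIMSEQ_I)
    fix r :: real assume r: "0 < r"
    obtain N where N: "\<forall>n\<ge>N. Sn n \<le> (sqrt (r/2))\<^sup>2" using main[of "sqrt (r/2)"] r by auto
    show "\<exists>no. \<forall>n\<ge>no. norm (Sn n - 0) < r"
    proof (intro exI allI impI)
      fix n assume "N \<le> n"
      then have "Sn n \<le> r/2" using N r by simp
      then show "norm (Sn n - 0) < r" using Snn[of n] r by simp
    qed
  qed
  then show ?thesis unfolding Sn_def u_def u1_def .
qed

end



context setting
begin

lemma H_conv:
  assumes f: "(f, f') \<in> H" and fc: "form_conv (rel_form H) f s" and fc': "form_conv (rel_form H) f s'"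
  shows "(\<lambda>n. tform H (s n) (s' n)) \<longlonglongrightarrow> tform H f f"
proof -
  have sH: "\<And>n. s n \<in> rdom H" and sl: "s \<longlonglongrightarrow> f" using fc unfolding form_conv_unfold by auto
  have sH': "\<And>n. s' n \<in> rdom H" and sl': "s' \<longlonglongrightarrow> f" using fc' unfolding form_conv_unfold by auto
  define s1 where "s1 n = (SOME y. (s n, y) \<in> H)" for n
  define t1 where "t1 n = (SOME y. (s' n, y) \<in> H)" for n
  have s1H: "(s n, s1 n) \<in> H" for n
  proof -
    obtain y where "(s n, y) \<in> H" using sH by (rule rdomE)
    then show ?thesis unfolding s1_def by (rule someI)
  qed
  have t1H: "(s' n, t1 n) \<in> H" for n
  proof -
    obtain y where "(s' n, y) \<in> H" using sH' by (rule rdomE)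
    then show ?thesis unfolding t1_def by (rule someI)
  qed
  define u where "u n = s n - f" for n
  define u1 where "u1 n = s1 n - f'" for n
  define v where "v n = s' n - f" for n
  define v1 where "v1 n = t1 n - f'" for n
  have uH: "(u n, u1 n) \<in> H" for n unfolding u_def u1_def by (rule lr_diff[OF H_lin s1H f])
  have vH: "(v n, v1 n) \<in> H" for n unfolding v_def v1_def by (rule lr_diff[OF H_lin t1H f])
  have S0: "(\<lambda>n. Re (sig c (u n) (u1 n) (u n))) \<longlonglongrightarrow> 0"
    unfolding u_def u1_def by (rule H_sig0[OF f fc s1H])
  have S0': "(\<lambda>n. Re (sig c (v n) (v1 n) (v n))) \<longlonglongrightarrow> 0"
    unfolding v_def v1_def by (rule H_sig0[OF f fc' t1H])
  have ul: "u \<longlonglongrightarrow> 0"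
  proof -
    have "(\<lambda>n. s n - f) \<longlonglongrightarrow> f - f" by (intro tendsto_intros sl)
    then show ?thesis unfolding u_def by simp
  qed
  have vl: "v \<longlonglongrightarrow> 0"
  proof -
    have "(\<lambda>n. s' n - f) \<longlonglongrightarrow> f - f" by (intro tendsto_intros sl')
    then show ?thesis unfolding v_def by simp
  qed
  have eq: "tform H (s n) (s' n) = cinner f' f + cinner f' (v n) + cinner (u n) f'
      + (sig c (u n) (u1 n) (v n) + complex_of_real c * cinner (u n) (v n))" for n
  proof -
    have e1: "tform H (s n) (s' n) = cinner (s1 n) (s' n)" by (rule tformH[OF s1H sH'])
    have e2: "cinner (s1 n) (s' n) = cinner (f' + u1 n) (f + v n)" unfolding u1_def v_def by simp
    have "cinner (f' + u1 n) (f + v n) = cinner f' f + cinner f' (v n) + cinner (u1 n) f + cinner (u1 n) (v n)"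
      by (simp add: cinner_add_left cinner_add_right)
    also have "cinner (u1 n) f = cinner (u n) f'" by (rule H_adj[OF uH f])
    also have "cinner (u1 n) (v n) = sig c (u n) (u1 n) (v n) + complex_of_real c * cinner (u n) (v n)"
      unfolding sig_def by simp
    finally show ?thesis using e1 e2 by simp
  qed
  have sigl: "(\<lambda>n. sig c (u n) (u1 n) (v n)) \<longlonglongrightarrow> 0"
  proof (rule Lim_null_comparison)
    show "\<forall>\<^sub>F n in sequentially. norm (sig c (u n) (u1 n) (v n)) \<le>
        sqrt (Re (sig c (u n) (u1 n) (u n)) * Re (sig c (v n) (v1 n) (v n)))"
    proof (rule always_eventually, rule allI)
      fix n
      have "(cmod (sig c (u n) (u1 n) (v n)))\<^sup>2 \<le> Re (sig c (u n) (u1 n) (u n)) * Re (sig c (v n) (v1 n) (v n))"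
        by (rule sig_cs[OF uH vH])
      then have "sqrt ((cmod (sig c (u n) (u1 n) (v n)))\<^sup>2) \<le> sqrt (Re (sig c (u n) (u1 n) (u n)) * Re (sig c (v n) (v1 n) (v n)))"
        by (rule real_sqrt_le_mono)
      then show "norm (sig c (u n) (u1 n) (v n)) \<le> sqrt (Re (sig c (u n) (u1 n) (u n)) * Re (sig c (v n) (v1 n) (v n)))"
        by simp
    qed
    have "(\<lambda>n. sqrt (Re (sig c (u n) (u1 n) (u n)) * Re (sig c (v n) (v1 n) (v n)))) \<longlonglongrightarrow> sqrt (0 * 0)"
      by (intro tendsto_intros S0 S0')
    then show "(\<lambda>n. sqrt (Re (sig c (u n) (u1 n) (u n)) * Re (sig c (v n) (v1 n) (v n)))) \<longlonglongrightarrow> 0" by simp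
  qed
  have "(\<lambda>n. cinner f' f + cinner f' (v n) + cinner (u n) f'
      + (sig c (u n) (u1 n) (v n) + complex_of_real c * cinner (u n) (v n))) \<longlonglongrightarrow>
      cinner f' f + cinner f' 0 + cinner 0 f' + (0 + complex_of_real c * cinner (0::'a) 0)"
    using tendsto_cinner[OF ul vl] by (intro tendsto_intros tendsto_cinner ul vl sigl tendsto_const)
  then have "(\<lambda>n. tform H (s n) (s' n)) \<longlonglongrightarrow> cinner f' f" unfolding eq by simp
  moreover have "tform H f f = cinner f' f" by (rule tformH[OF f in_rdom[OF f]])
  ultimately show ?thesis by simp
qed

lemma closedH_val:
  assumes f: "(f, f') \<in> H"
  shows "f \<in> fst (closed_form H) \<and> snd (closed_form H) f f = tform H f f"
proof -
  have t0: "tform H 0 0 = 0" unfolding tform_def by simp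
  have s0: "form_conv (rel_form H) f (\<lambda>n. f)"
    unfolding form_conv_unfold using in_rdom[OF f] t0 by simp
  have "(THE v. \<forall>s s'. form_conv (rel_form H) f s \<longrightarrow> form_conv (rel_form H) f s' \<longrightarrow>
            (\<lambda>n. tform H (s n) (s' n)) \<longlonglongrightarrow> v) = tform H f f"
  proof (rule the_equality)
    show "\<forall>s s'. form_conv (rel_form H) f s \<longrightarrow> form_conv (rel_form H) f s' \<longrightarrow>
            (\<lambda>n. tform H (s n) (s' n)) \<longlonglongrightarrow> tform H f f" using H_conv[OF f] by blast
  next
    fix v assume "\<forall>s s'. form_conv (rel_form H) f s \<longrightarrow> form_conv (rel_form H) f s' \<longrightarrow>
            (\<lambda>n. tform H (s n) (s' n)) \<longlonglongrightarrow> v"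
    then have "(\<lambda>n. tform H f f) \<longlonglongrightarrow> v" using s0 by blast
    then show "v = tform H f f" using LIMSEQ_unique tendsto_const by metis
  qed
  moreover have "f \<in> fst (closed_form H)" unfolding closed_form_def form_closure_def using s0 by auto
  ultimately show ?thesis unfolding closed_form_def form_closure_def rel_form_def by simp
qed

lemma part_c:
  assumes ext: "form_ext (closed_form H) (closed_form K)"
    and f: "(f, f') \<in> H" and h: "(h, h') \<in> S"
  shows "tform H (f - h) (f - h) - complex_of_real (c * (norm (f - h))\<^sup>2)
          = complex_of_real ((norm (R f - Q h))\<^sup>2)"
proof -
  have fd: "f \<in> rdom Js" by (rule dom_Js[OF f])
  have cH: "f \<in> fst (closed_form H)" "snd (closed_form H) f f = tform H f f" using closedH_val[OF f] by auto
  have fK: "f \<in> fst (closed_form K)" and eqv: "snd (closed_form H) f f = snd (closed_form K) f f"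
    using ext cH(1) unfolding form_ext_def by auto
  have "tform H f f = complex_of_real c * cinner f f + cinner (R f) (R f)"
    using cH(2) eqv closedK_val[OF fK] by simp
  then have D0: "tform H f f - complex_of_real (c * (norm f)\<^sup>2) - complex_of_real ((norm (R f))\<^sup>2) = 0"
    by (simp add: cinner_self)
  show ?thesis using part_a[OF h f fd] D0 by simp
qed

end

theorem lemma7p3:
  fixes S H :: "('a::chilbert_space \<times> 'a) set"
    and Q :: "'a \<Rightarrow> 'k::chilbert_space"
    and \<gamma> c :: real
  assumes S_sb: "semibounded S"
    and S_lb: "is_lower_bound S \<gamma>"
    and c_le: "c \<le> \<gamma>"
    and Q_rep: "representing_map S c Q"
    and H_sa: "selfadjoint H"
    and H_sb: "semibounded H"
    and S_sub_H: "S \<subseteq> H"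
    and H_bb: "bounded_below H c"
  shows
    "(\<forall>(h, h')\<in>S. \<forall>(f, f')\<in>H. f \<in> rdom (radj (companion S c Q)) \<longrightarrow>
        tform H (f - h) (f - h) - complex_of_real (c * (norm (f - h))\<^sup>2)
          - complex_of_real ((norm (rapp (rreg (radj (companion S c Q))) f - Q h))\<^sup>2)
        = tform H f f - complex_of_real (c * (norm f)\<^sup>2)
          - complex_of_real ((norm (rapp (rreg (radj (companion S c Q))) f))\<^sup>2))
   \<and> (\<forall>(f, f')\<in>H. \<forall>(h, h')\<in>S. f \<in> rdom (radj (companion S c Q)) \<and>
        tform H (f - h) (f - h) - complex_of_real (c * (norm (f - h))\<^sup>2)
          \<ge> complex_of_real ((norm (rapp (rreg (radj (companion S c Q))) f - Q h))\<^sup>2))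
   \<and> (form_ext (closed_form H) (closed_form (krein_ext S c Q)) \<longrightarrow>
      (\<forall>(f, f')\<in>H. \<forall>(h, h')\<in>S.
        tform H (f - h) (f - h) - complex_of_real (c * (norm (f - h))\<^sup>2)
          = complex_of_real ((norm (rapp (rreg (radj (companion S c Q))) f - Q h))\<^sup>2)))"
proof -
  have Slin: "lin_rel S" using S_sb unfolding semibounded_def by blast
  have Hlin: "lin_rel H" using H_sb unfolding semibounded_def by blast
  interpret setting S H Q c by (rule setting.intro[OF Slin Q_rep H_sa Hlin S_sub_H H_bb])
  show ?thesis
  proof (intro conjI)
    show "\<forall>(h, h')\<in>S. \<forall>(f, f')\<in>H. f \<in> rdom (radj (companion S c Q)) \<longrightarrow>
        tform H (f - h) (f - h) - complex_of_real (c * (norm (f - h))\<^sup>2)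
          - complex_of_real ((norm (rapp (rreg (radj (companion S c Q))) f - Q h))\<^sup>2)
        = tform H f f - complex_of_real (c * (norm f)\<^sup>2)
          - complex_of_real ((norm (rapp (rreg (radj (companion S c Q))) f))\<^sup>2)"
      using part_a by fastforce
    show "\<forall>(f, f')\<in>H. \<forall>(h, h')\<in>S. f \<in> rdom (radj (companion S c Q)) \<and>
        tform H (f - h) (f - h) - complex_of_real (c * (norm (f - h))\<^sup>2)
          \<ge> complex_of_real ((norm (rapp (rreg (radj (companion S c Q))) f - Q h))\<^sup>2)"
      using part_b by fastforce
    show "form_ext (closed_form H) (closed_form (krein_ext S c Q)) \<longrightarrow>
      (\<forall>(f, f')\<in>H. \<forall>(h, h')\<in>S.
        tform H (f - h) (f - h) - complex_of_real (c * (norm (f - h))\<^sup>2)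
          = complex_of_real ((norm (rapp (rreg (radj (companion S c Q))) f - Q h))\<^sup>2))"
      using part_c by fastforce
  qed
qed

end
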